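(* Let $x,y\ge 1$, $n\ge\max(x,y)$, and let $G$ be a minimal $(x,y)$ task-dependency graph of order $n$. Then $G$ has the maximum possible number of edges among all minimal $(x,y)$ task-dependency graphs of order $n$ if and only if $G$ has at most two components that are not isolated vertices, and (1) if $G$ consists of all isolated vertices, then $n=x=y$; (2) if $G$ has two components that are not isolated vertices, then $G$ has no interior vertex; and (3) if $G$ has exactly one component $C$ that is not an isolated vertex, then either (a) $C$ has no interior vertex; (b) there exist an initial vertex $u$, a terminal vertex $v$, and multiple interior vertices in $C$ such that all interior vertices of $C$ are adjacent to both $u$ and $v$, where $u$ may be adjacent to more terminal vertices and $v$ may be adjacent to more initial vertices; or (c) $C$ has exactly one interior vertex, which is adjacent to $p>0$ initial vertices and $q>0$ terminal vertices; if $p=1$ this initial vertex may be adjacent to more terminal vertices; if $q=1$ this terminal vertex may be adjacent to more initial vertices; if $p>1$ these initial vertices are adjacent only to the interior vertex; if $q>1$ these terminal vertices are adjacent only to the interior vertex.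
   Context: A task-dependency graph is a finite directed acyclic graph (no loops, no multiple edges). A vertex is initial if it has in-degree $0$, terminal if it has out-degree $0$ (an isolated vertex is both), exterior if it is initial or terminal, and interior otherwise. An $(x,y)$ task-dependency graph has exactly $x$ initial and $y$ terminal vertices; it is minimal if removing any single edge produces a graph that is not an $(x,y)$ task-dependency graph. Components are connected components of the underlying undirected graph; two vertices are adjacent if there is an edge between them in either direction. The order is the number of vertices. *)

theory Defs
  imports Main
begin

definition tdg :: "'a set \<Rightarrow> ('a \<times> 'a) set \<Rightarrow> bool" where
  "tdg V E \<longleftrightarrow> finite V \<and> E \<subseteq> V \<times> V \<and> acyclic E"

definition initial :: "'a set \<Rightarrow> ('a \<times> 'a) set \<Rightarrow> 'a \<Rightarrow> bool" where
  "initial V E v \<longleftrightarrow> v \<in> V \<and> (\<forall>u. (u, v) \<notin> E)"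

definition terminal :: "'a set \<Rightarrow> ('a \<times> 'a) set \<Rightarrow> 'a \<Rightarrow> bool" where
  "terminal V E v \<longleftrightarrow> v \<in> V \<and> (\<forall>u. (v, u) \<notin> E)"

definition interior :: "'a set \<Rightarrow> ('a \<times> 'a) set \<Rightarrow> 'a \<Rightarrow> bool" where
  "interior V E v \<longleftrightarrow> v \<in> V \<and> \<not> initial V E v \<and> \<not> terminal V E v"

definition xy_tdg :: "nat \<Rightarrow> nat \<Rightarrow> 'a set \<Rightarrow> ('a \<times> 'a) set \<Rightarrow> bool" where
  "xy_tdg x y V E \<longleftrightarrow> tdg V E \<and> card {v \<in> V. initial V E v} = x
      \<and> card {v \<in> V. terminal V E v} = y"

definition minimal_xy_tdg :: "nat \<Rightarrow> nat \<Rightarrow> 'a set \<Rightarrow> ('a \<times> 'a) set \<Rightarrow> bool" where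
  "minimal_xy_tdg x y V E \<longleftrightarrow> xy_tdg x y V E \<and> (\<forall>e \<in> E. \<not> xy_tdg x y V (E - {e}))"

definition adj :: "('a \<times> 'a) set \<Rightarrow> 'a \<Rightarrow> 'a \<Rightarrow> bool" where
  "adj E u v \<longleftrightarrow> (u, v) \<in> E \<or> (v, u) \<in> E"

definition components :: "'a set \<Rightarrow> ('a \<times> 'a) set \<Rightarrow> 'a set set" where
  "components V E = {C. \<exists>v \<in> V. C = {u \<in> V. (v, u) \<in> {(a, b). adj E a b}\<^sup>*}}"

text \<open>Components that are not isolated vertices (i.e. have at least two vertices).\<close>
definition nontriv_components :: "'a set \<Rightarrow> ('a \<times> 'a) set \<Rightarrow> 'a set set" where
  "nontriv_components V E = {C \<in> components V E. card C \<ge> 2}"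

end

theory Submission
  imports Defs
begin

definition outN :: "('a \<times> 'a) set \<Rightarrow> 'a \<Rightarrow> 'a set" where
  "outN E p = {q. (p, q) \<in> E}"
definition inN :: "('a \<times> 'a) set \<Rightarrow> 'a \<Rightarrow> 'a set" where
  "inN E q = {p. (p, q) \<in> E}"

definition OT :: "'a set \<Rightarrow> ('a \<times> 'a) set \<Rightarrow> 'a set" where
  "OT V E = {p \<in> V. 2 \<le> card (outN E p)}"
definition IT :: "'a set \<Rightarrow> ('a \<times> 'a) set \<Rightarrow> 'a set" where
  "IT V E = {q \<in> V. 2 \<le> card (inN E q)}"
definition EB :: "('a \<times> 'a) set \<Rightarrow> ('a \<times> 'a) set" where
  "EB E = {e \<in> E. card (outN E (fst e)) = 1 \<and> card (inN E (snd e)) = 1}"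

lemma tdg_finE: "tdg V E \<Longrightarrow> finite E"
  unfolding tdg_def by (meson finite_SigmaI finite_subset)

lemma tdg_sub: "tdg V E \<Longrightarrow> (p, q) \<in> E \<Longrightarrow> p \<in> V \<and> q \<in> V"
  unfolding tdg_def by auto

lemma tdg_noloop: "tdg V E \<Longrightarrow> (p, q) \<in> E \<Longrightarrow> p \<noteq> q"
  unfolding tdg_def acyclic_def by auto

lemma tdg_no2cycle: "tdg V E \<Longrightarrow> (p, q) \<in> E \<Longrightarrow> (q, p) \<in> E \<Longrightarrow> False"
  unfolding tdg_def acyclic_def by (meson trancl.r_into_trancl trancl_into_trancl)

lemma fin_outN: "tdg V E \<Longrightarrow> finite (outN E p)"
proof -
  assume "tdg V E"
  then have "outN E p \<subseteq> V" unfolding outN_def tdg_def by auto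
  then show ?thesis using \<open>tdg V E\<close> finite_subset unfolding tdg_def by blast
qed

lemma fin_inN: "tdg V E \<Longrightarrow> finite (inN E p)"
proof -
  assume "tdg V E"
  then have "inN E p \<subseteq> V" unfolding inN_def tdg_def by auto
  then show ?thesis using \<open>tdg V E\<close> finite_subset unfolding tdg_def by blast
qed

lemma card_ge2_E:
  assumes "finite A" "a \<in> A" "card A \<noteq> 1" shows "\<exists>b\<in>A. b \<noteq> a"
proof (rule ccontr)
  assume "\<not> (\<exists>b\<in>A. b \<noteq> a)"
  then have "A = {a}" using assms(2) by blast
  then show False using assms(3) by simp
qed

lemma card1_unique: "card A = 1 \<Longrightarrow> a \<in> A \<Longrightarrow> b \<in> A \<Longrightarrow> a = b"
  by (metis card_1_singletonE singletonD)

lemma card1_eq: "card A = 1 \<Longrightarrow> a \<in> A \<Longrightarrow> A = {a}"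
  by (metis card_1_singletonE singletonD)

lemma two_card: "finite A \<Longrightarrow> a \<in> A \<Longrightarrow> b \<in> A \<Longrightarrow> a \<noteq> b \<Longrightarrow> 2 \<le> card A"
proof -
  assume "finite A" "a \<in> A" "b \<in> A" "a \<noteq> b"
  then have "{a, b} \<subseteq> A" by auto
  then have "card {a,b} \<le> card A" using \<open>finite A\<close> card_mono by blast
  then show ?thesis using \<open>a \<noteq> b\<close> by simp
qed

lemma min_edge:
  assumes m: "minimal_xy_tdg x y V E" and e: "(p, q) \<in> E"
  shows "card (outN E p) = 1 \<or> card (inN E q) = 1"
proof (rule ccontr)
  assume c: "\<not> ?thesis"
  have t: "tdg V E" using m unfolding minimal_xy_tdg_def xy_tdg_def by auto
  obtain q' where q': "(p, q') \<in> E" "q' \<noteq> q"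
    using card_ge2_E[OF fin_outN[OF t], of q p] c e unfolding outN_def by auto
  obtain p' where p': "(p', q) \<in> E" "p' \<noteq> p"
    using card_ge2_E[OF fin_inN[OF t], of p q] c e unfolding inN_def by auto
  let ?E = "E - {(p, q)}"
  have "tdg V ?E" using t unfolding tdg_def using acyclic_subset by blast
  moreover have "{v \<in> V. initial V ?E v} = {v \<in> V. initial V E v}"
    unfolding initial_def using p' by auto
  moreover have "{v \<in> V. terminal V ?E v} = {v \<in> V. terminal V E v}"
    unfolding terminal_def using q' by auto
  ultimately have "xy_tdg x y V ?E" using m unfolding minimal_xy_tdg_def xy_tdg_def by simp
  then show False using m e unfolding minimal_xy_tdg_def by blast
qed

lemma min_intro:
  assumes t: "tdg V E" and cx: "card {v \<in> V. initial V E v} = x"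
    and cy: "card {v \<in> V. terminal V E v} = y"
    and ed: "\<And>p q. (p, q) \<in> E \<Longrightarrow> card (outN E p) = 1 \<or> card (inN E q) = 1"
  shows "minimal_xy_tdg x y V E"
  unfolding minimal_xy_tdg_def
proof (intro conjI ballI)
  show "xy_tdg x y V E" using t cx cy unfolding xy_tdg_def by simp
  fix e assume e: "e \<in> E"
  obtain p q where pq: "e = (p, q)" by force
  have fV: "finite V" using t unfolding tdg_def by simp
  show "\<not> xy_tdg x y V (E - {e})"
  proof
    assume xy: "xy_tdg x y V (E - {e})"
    from ed[of p q] e pq consider "card (outN E p) = 1" | "card (inN E q) = 1" by auto
    then show False
    proof cases
      case 1
      moreover have "q \<in> outN E p" using e pq unfolding outN_def by auto
      ultimately have "outN E p = {q}" by (rule card1_eq)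
      then have a: "terminal V (E - {e}) p" "\<not> terminal V E p" "p \<in> V"
        using e pq tdg_sub[OF t] unfolding terminal_def outN_def by auto
      have "{v \<in> V. terminal V E v} \<subset> {v \<in> V. terminal V (E - {e}) v}"
        using a unfolding terminal_def by auto
      then have "card {v \<in> V. terminal V E v} < card {v \<in> V. terminal V (E - {e}) v}"
        using fV by (simp add: psubset_card_mono)
      then show False using xy cy unfolding xy_tdg_def by simp
    next
      case 2
      moreover have "p \<in> inN E q" using e pq unfolding inN_def by auto
      ultimately have "inN E q = {p}" by (rule card1_eq)
      then have a: "initial V (E - {e}) q" "\<not> initial V E q" "q \<in> V"
        using e pq tdg_sub[OF t] unfolding initial_def inN_def by auto
      have "{v \<in> V. initial V E v} \<subset> {v \<in> V. initial V (E - {e}) v}"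
        using a unfolding initial_def by auto
      then have "card {v \<in> V. initial V E v} < card {v \<in> V. initial V (E - {e}) v}"
        using fV by (simp add: psubset_card_mono)
      then show False using xy cx unfolding xy_tdg_def by simp
    qed
  qed
qed

lemma card_fst_bij:
  assumes t: "tdg V E"
  shows "card {e \<in> E. card (outN E (fst e)) = 1} = card {p \<in> V. card (outN E p) = 1}"
proof -
  let ?E1 = "{e \<in> E. card (outN E (fst e)) = 1}"
  have "bij_betw fst ?E1 {p \<in> V. card (outN E p) = 1}"
    unfolding bij_betw_def
  proof
    show "inj_on fst ?E1"
    proof (rule inj_onI)
      fix e1 e2 assume a: "e1 \<in> ?E1" "e2 \<in> ?E1" "fst e1 = fst e2"
      obtain p q1 where 1: "e1 = (p, q1)" by force
      obtain q2 where 2: "e2 = (p, q2)" using a(3) 1 by (metis fst_conv prod.collapse)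
      have "q1 \<in> outN E p" "q2 \<in> outN E p" "card (outN E p) = 1"
        using a 1 2 unfolding outN_def by auto
      then have "q1 = q2" using card1_unique by metis
      then show "e1 = e2" using 1 2 by simp
    qed
    show "fst ` ?E1 = {p \<in> V. card (outN E p) = 1}"
    proof
      show "fst ` ?E1 \<subseteq> {p \<in> V. card (outN E p) = 1}"
        using tdg_sub[OF t] by force
      show "{p \<in> V. card (outN E p) = 1} \<subseteq> fst ` ?E1"
      proof
        fix p assume p: "p \<in> {p \<in> V. card (outN E p) = 1}"
        then obtain q where "outN E p = {q}" by (auto simp: card_1_singleton_iff)
        then have "(p, q) \<in> ?E1" using p unfolding outN_def by auto
        then show "p \<in> fst ` ?E1" by force
      qed
    qed
  qed
  then show ?thesis by (rule bij_betw_same_card)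
qed

lemma card_snd_bij:
  assumes t: "tdg V E"
  shows "card {e \<in> E. card (inN E (snd e)) = 1} = card {p \<in> V. card (inN E p) = 1}"
proof -
  let ?E1 = "{e \<in> E. card (inN E (snd e)) = 1}"
  have "bij_betw snd ?E1 {p \<in> V. card (inN E p) = 1}"
    unfolding bij_betw_def
  proof
    show "inj_on snd ?E1"
    proof (rule inj_onI)
      fix e1 e2 assume a: "e1 \<in> ?E1" "e2 \<in> ?E1" "snd e1 = snd e2"
      obtain p q1 where 1: "e1 = (q1, p)" by force
      obtain q2 where 2: "e2 = (q2, p)" using a(3) 1 by (metis snd_conv prod.collapse)
      have "q1 \<in> inN E p" "q2 \<in> inN E p" "card (inN E p) = 1"
        using a 1 2 unfolding inN_def by auto
      then have "q1 = q2" using card1_unique by metis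
      then show "e1 = e2" using 1 2 by simp
    qed
    show "snd ` ?E1 = {p \<in> V. card (inN E p) = 1}"
    proof
      show "snd ` ?E1 \<subseteq> {p \<in> V. card (inN E p) = 1}"
        using tdg_sub[OF t] by force
      show "{p \<in> V. card (inN E p) = 1} \<subseteq> snd ` ?E1"
      proof
        fix p assume p: "p \<in> {p \<in> V. card (inN E p) = 1}"
        then obtain q where "inN E p = {q}" by (auto simp: card_1_singleton_iff)
        then have "(q, p) \<in> ?E1" using p unfolding inN_def by auto
        then show "p \<in> snd ` ?E1" by force
      qed
    qed
  qed
  then show ?thesis by (rule bij_betw_same_card)
qed

lemma nonterm_split:
  assumes t: "tdg V E" and c: "card {v \<in> V. terminal V E v} = y"
  shows "card {p \<in> V. card (outN E p) = 1} + card (OT V E) + y = card V"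
proof -
  have fV: "finite V" using t unfolding tdg_def by simp
  let ?T = "{v \<in> V. terminal V E v}"
  have "{p \<in> V. card (outN E p) = 1} \<union> OT V E = V - ?T"
  proof (rule set_eqI)
    fix p
    have "p \<in> V \<Longrightarrow> (\<not> terminal V E p) = (outN E p \<noteq> {})"
      unfolding terminal_def outN_def by auto
    moreover have "(outN E p \<noteq> {}) = (card (outN E p) \<ge> 1)"
      using fin_outN[OF t] by (simp add: Suc_le_eq card_gt_0_iff)
    ultimately show "p \<in> {p \<in> V. card (outN E p) = 1} \<union> OT V E \<longleftrightarrow> p \<in> V - ?T"
      unfolding OT_def by auto
  qed
  moreover have "{p \<in> V. card (outN E p) = 1} \<inter> OT V E = {}" unfolding OT_def by auto
  ultimately have "card {p \<in> V. card (outN E p) = 1} + card (OT V E) = card (V - ?T)"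
    using fV by (metis (no_types, lifting) card_Un_disjoint finite_Diff finite_Un)
  moreover have "card (V - ?T) = card V - y" using c fV by (simp add: card_Diff_subset)
  moreover have "y \<le> card V" using c fV by (metis (no_types, lifting) card_mono mem_Collect_eq subsetI)
  ultimately show ?thesis by simp
qed

lemma noninit_split:
  assumes t: "tdg V E" and c: "card {v \<in> V. initial V E v} = x"
  shows "card {p \<in> V. card (inN E p) = 1} + card (IT V E) + x = card V"
proof -
  have fV: "finite V" using t unfolding tdg_def by simp
  let ?T = "{v \<in> V. initial V E v}"
  have "{p \<in> V. card (inN E p) = 1} \<union> IT V E = V - ?T"
  proof (rule set_eqI)
    fix p
    have "p \<in> V \<Longrightarrow> (\<not> initial V E p) = (inN E p \<noteq> {})"
      unfolding initial_def inN_def by auto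
    moreover have "(inN E p \<noteq> {}) = (card (inN E p) \<ge> 1)"
      using fin_inN[OF t] by (simp add: Suc_le_eq card_gt_0_iff)
    ultimately show "p \<in> {p \<in> V. card (inN E p) = 1} \<union> IT V E \<longleftrightarrow> p \<in> V - ?T"
      unfolding IT_def by auto
  qed
  moreover have "{p \<in> V. card (inN E p) = 1} \<inter> IT V E = {}" unfolding IT_def by auto
  ultimately have "card {p \<in> V. card (inN E p) = 1} + card (IT V E) = card (V - ?T)"
    using fV by (metis (no_types, lifting) card_Un_disjoint finite_Diff finite_Un)
  moreover have "card (V - ?T) = card V - x" using c fV by (simp add: card_Diff_subset)
  moreover have "x \<le> card V" using c fV by (metis (no_types, lifting) card_mono mem_Collect_eq subsetI)
  ultimately show ?thesis by simp
qed

lemma count_identity: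
  assumes m: "minimal_xy_tdg x y V E"
  shows "card E + card (EB E) + card (OT V E) + card (IT V E) + x + y = 2 * card V"
proof -
  have t: "tdg V E" and cx: "card {v \<in> V. initial V E v} = x"
    and cy: "card {v \<in> V. terminal V E v} = y"
    using m unfolding minimal_xy_tdg_def xy_tdg_def by auto
  let ?E1 = "{e \<in> E. card (outN E (fst e)) = 1}"
  let ?E2 = "{e \<in> E. card (inN E (snd e)) = 1}"
  have fE: "finite E" using tdg_finE[OF t] .
  have "E = ?E1 \<union> ?E2"
  proof (rule set_eqI)
    fix e show "e \<in> E \<longleftrightarrow> e \<in> ?E1 \<union> ?E2" using min_edge[OF m, of "fst e" "snd e"] by auto
  qed
  moreover have "EB E = ?E1 \<inter> ?E2" unfolding EB_def by auto
  ultimately have "card E + card (EB E) = card ?E1 + card ?E2"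
    using card_Un_Int[of ?E1 ?E2] fE by simp
  then show ?thesis using card_fst_bij[OF t] card_snd_bij[OF t] nonterm_split[OF t cy]
      noninit_split[OF t cx] by simp
qed

lemma OT_empty:
  assumes m: "minimal_xy_tdg x y V E" and o: "OT V E = {}"
  shows "card (EB E) + card (IT V E) + x = card V"
proof -
  have t: "tdg V E" and cx: "card {v \<in> V. initial V E v} = x"
    and cy: "card {v \<in> V. terminal V E v} = y"
    using m unfolding minimal_xy_tdg_def xy_tdg_def by auto
  have "E = {e \<in> E. card (outN E (fst e)) = 1}"
  proof (rule set_eqI, rule iffI)
    fix e assume e: "e \<in> E"
    then have "snd e \<in> outN E (fst e)" unfolding outN_def by auto
    then have "card (outN E (fst e)) \<ge> 1" using fin_outN[OF t]
      by (metis One_nat_def Suc_leI card_gt_0_iff empty_iff)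
    moreover have "fst e \<in> V" using e tdg_sub[OF t] by (metis prod.collapse)
    ultimately show "e \<in> {e \<in> E. card (outN E (fst e)) = 1}" using o e unfolding OT_def by auto
  qed auto
  then have "card E = card {p \<in> V. card (outN E p) = 1}" using card_fst_bij[OF t] by simp
  then show ?thesis using count_identity[OF m] nonterm_split[OF t cy] o by simp
qed

lemma IT_empty:
  assumes m: "minimal_xy_tdg x y V E" and o: "IT V E = {}"
  shows "card (EB E) + card (OT V E) + y = card V"
proof -
  have t: "tdg V E" and cx: "card {v \<in> V. initial V E v} = x"
    and cy: "card {v \<in> V. terminal V E v} = y"
    using m unfolding minimal_xy_tdg_def xy_tdg_def by auto
  have "E = {e \<in> E. card (inN E (snd e)) = 1}"
  proof (rule set_eqI, rule iffI)
    fix e assume e: "e \<in> E"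
    then have "fst e \<in> inN E (snd e)" unfolding inN_def by auto
    then have "card (inN E (snd e)) \<ge> 1" using fin_inN[OF t]
      by (metis One_nat_def Suc_leI card_gt_0_iff empty_iff)
    moreover have "snd e \<in> V" using e tdg_sub[OF t] by (metis prod.collapse)
    ultimately show "e \<in> {e \<in> E. card (inN E (snd e)) = 1}" using o e unfolding IT_def by auto
  qed auto
  then have "card E = card {p \<in> V. card (inN E p) = 1}" using card_snd_bij[OF t] by simp
  then show ?thesis using count_identity[OF m] noninit_split[OF t cx] o by simp
qed

definition R :: "('a \<times> 'a) set \<Rightarrow> ('a \<times> 'a) set" where
  "R E = {(a, b). adj E a b}"
definition cmp :: "'a set \<Rightarrow> ('a \<times> 'a) set \<Rightarrow> 'a \<Rightarrow> 'a set" where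
  "cmp V E v = {u \<in> V. (v, u) \<in> (R E)\<^sup>*}"

lemma components_eq: "components V E = cmp V E ` V"
  unfolding components_def cmp_def R_def by auto

lemma R_sym: "(v, u) \<in> (R E)\<^sup>* \<Longrightarrow> (u, v) \<in> (R E)\<^sup>*"
proof -
  have "sym (R E)" unfolding R_def adj_def sym_def by auto
  then have "sym ((R E)\<^sup>*)" by (rule sym_rtrancl)
  then show "(v, u) \<in> (R E)\<^sup>* \<Longrightarrow> (u, v) \<in> (R E)\<^sup>*" by (meson symD)
qed

lemma comp_self: "v \<in> V \<Longrightarrow> v \<in> cmp V E v"
  unfolding cmp_def by auto

lemma comp_mem_eq: "u \<in> cmp V E v \<Longrightarrow> cmp V E u = cmp V E v"
proof -
  assume u: "u \<in> cmp V E v"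
  then have vu: "(v, u) \<in> (R E)\<^sup>*" unfolding cmp_def by auto
  then have uv: "(u, v) \<in> (R E)\<^sup>*" by (rule R_sym)
  show ?thesis unfolding cmp_def
  proof (rule Collect_cong)
    fix w show "(w \<in> V \<and> (u, w) \<in> (R E)\<^sup>*) = (w \<in> V \<and> (v, w) \<in> (R E)\<^sup>*)"
      using rtrancl_trans[OF uv, of w] rtrancl_trans[OF vu, of w] by blast
  qed
qed

lemma comp_sub: "cmp V E v \<subseteq> V" unfolding cmp_def by auto

lemma comp_closed: "E \<subseteq> V \<times> V \<Longrightarrow> u \<in> cmp V E v \<Longrightarrow> adj E u z \<Longrightarrow> z \<in> cmp V E v"
proof -
  assume s: "E \<subseteq> V \<times> V" and u: "u \<in> cmp V E v" and a: "adj E u z"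
  have "z \<in> V" using s a unfolding adj_def by auto
  moreover have "(u, z) \<in> R E" using a unfolding R_def by auto
  ultimately show ?thesis using u unfolding cmp_def by (auto intro: rtrancl_into_rtrancl)
qed

lemma comp_closure:
  assumes cl: "\<And>p z. p \<in> S \<Longrightarrow> adj E p z \<Longrightarrow> z \<in> S" and v: "v \<in> S"
  shows "cmp V E v \<subseteq> S"
proof
  fix u assume "u \<in> cmp V E v"
  then have "(v, u) \<in> (R E)\<^sup>*" unfolding cmp_def by auto
  then show "u \<in> S"
  proof (induction rule: rtrancl_induct)
    case base then show ?case using v .
  next
    case (step y z) then show ?case using cl unfolding R_def by auto
  qed
qed

lemma iso_comp: "v \<in> V \<Longrightarrow> \<not> (\<exists>z. adj E v z) \<Longrightarrow> cmp V E v = {v}"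
proof -
  assume v: "v \<in> V" and n: "\<not> (\<exists>z. adj E v z)"
  have "cmp V E v \<subseteq> {v}" by (rule comp_closure) (use n in auto)
  then show ?thesis using comp_self[OF v] by auto
qed

lemma noniso_comp: "tdg V E \<Longrightarrow> v \<in> V \<Longrightarrow> adj E v z \<Longrightarrow> 2 \<le> card (cmp V E v)"
proof -
  assume t: "tdg V E" and v: "v \<in> V" and a: "adj E v z"
  have s: "E \<subseteq> V \<times> V" using t unfolding tdg_def by auto
  have "z \<in> cmp V E v" using comp_closed[OF s comp_self[OF v] a] .
  moreover have "z \<noteq> v" using a tdg_noloop[OF t] unfolding adj_def by auto
  moreover have "finite (cmp V E v)" using t comp_sub unfolding tdg_def by (metis finite_subset)
  ultimately show ?thesis using two_card comp_self[OF v] by metis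
qed

lemma nontriv_eq: "tdg V E \<Longrightarrow> nontriv_components V E = cmp V E ` {v \<in> V. \<exists>z. adj E v z}"
proof -
  assume t: "tdg V E"
  show ?thesis
  proof (rule set_eqI, rule iffI)
    fix K assume "K \<in> nontriv_components V E"
    then obtain v where v: "v \<in> V" "K = cmp V E v" "card K \<ge> 2"
      unfolding nontriv_components_def components_eq by auto
    have "\<exists>z. adj E v z"
    proof (rule ccontr)
      assume "\<not> (\<exists>z. adj E v z)"
      then have "K = {v}" using iso_comp v by metis
      then show False using v by simp
    qed
    then show "K \<in> cmp V E ` {v \<in> V. \<exists>z. adj E v z}" using v by auto
  next
    fix K assume "K \<in> cmp V E ` {v \<in> V. \<exists>z. adj E v z}"
    then obtain v z where v: "v \<in> V" "K = cmp V E v" "adj E v z" by auto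
    then show "K \<in> nontriv_components V E"
      unfolding nontriv_components_def components_eq using noniso_comp[OF t] by auto
  qed
qed

lemma comps_count:
  assumes t: "tdg V E"
  shows "card (components V E) = card (nontriv_components V E) + card {v \<in> V. \<not> (\<exists>z. adj E v z)}"
proof -
  let ?N = "{v \<in> V. \<exists>z. adj E v z}" and ?I = "{v \<in> V. \<not> (\<exists>z. adj E v z)}"
  have fV: "finite V" using t unfolding tdg_def by auto
  have "V = ?N \<union> ?I" by blast
  then have "components V E = cmp V E ` ?N \<union> cmp V E ` ?I" unfolding components_eq by (metis image_Un)
  moreover have "cmp V E ` ?I = (\<lambda>v. {v}) ` ?I" using iso_comp by (metis (no_types, lifting) image_cong mem_Collect_eq)
  moreover have "card ((\<lambda>v. {v}) ` ?I) = card ?I" by (rule card_image) (auto simp: inj_on_def)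
  moreover have "cmp V E ` ?N \<inter> (\<lambda>v. {v}) ` ?I = {}"
    using noniso_comp[OF t] by fastforce
  moreover have "finite (cmp V E ` ?N)" "finite ((\<lambda>v. {v}) ` ?I)" using fV by auto
  ultimately show ?thesis using nontriv_eq[OF t] by (simp add: card_Un_disjoint)
qed

lemma card_image_le_fun:
  assumes f: "finite X" and h: "\<And>x y. x \<in> X \<Longrightarrow> y \<in> X \<Longrightarrow> g x = g y \<Longrightarrow> f x = f y"
  shows "card (f ` X) \<le> card (g ` X)"
proof -
  have "f ` X = (\<lambda>z. f (inv_into X g z)) ` (g ` X)"
  proof (rule set_eqI, rule iffI)
    fix w assume "w \<in> f ` X"
    then obtain x where x: "x \<in> X" "w = f x" by auto
    have "inv_into X g (g x) \<in> X" "g (inv_into X g (g x)) = g x"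
      using x by (auto simp: inv_into_into f_inv_into_f)
    then have "f (inv_into X g (g x)) = f x" using h x by metis
    then show "w \<in> (\<lambda>z. f (inv_into X g z)) ` (g ` X)" using x by force
  next
    fix w assume "w \<in> (\<lambda>z. f (inv_into X g z)) ` (g ` X)"
    then obtain x where x: "x \<in> X" "w = f (inv_into X g (g x))" by auto
    then show "w \<in> f ` X" by (auto simp: inv_into_into)
  qed
  then show ?thesis using f by (metis card_image_le finite_imageI)
qed

lemma R_insert: "R (insert (a, b) F) = insert (a, b) (insert (b, a) (R F))"
  unfolding R_def adj_def by auto

lemma comps_step:
  assumes fV: "finite V" and ab: "a \<in> V"
  shows "card (cmp V F ` V) \<le> card (cmp V (insert (a, b) F) ` V) + 1"
proof -
  let ?c = "cmp V F" and ?c' = "cmp V (insert (a, b) F)"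
  let ?A = "?c a"
  have "?c ` V = ?c ` (V - ?A) \<union> ?c ` (V \<inter> ?A)" by auto
  moreover have "?c ` (V \<inter> ?A) \<subseteq> {?c a}"
  proof
    fix K assume "K \<in> ?c ` (V \<inter> ?A)"
    then obtain u where "u \<in> ?A" "K = ?c u" by auto
    then show "K \<in> {?c a}" using comp_mem_eq[of u V F a] by simp
  qed
  then have "card (?c ` (V \<inter> ?A)) \<le> card {?c a}" by (intro card_mono) auto
  then have "card (?c ` (V \<inter> ?A)) \<le> 1" by simp
  moreover have "card (?c ` (V - ?A)) \<le> card (?c' ` (V - ?A))"
  proof (rule card_image_le_fun)
    show "finite (V - ?A)" using fV by auto
    fix v1 v2 assume v: "v1 \<in> V - ?A" "v2 \<in> V - ?A" and eq: "?c' v1 = ?c' v2"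
    have "v2 \<in> ?c' v2" using v by (simp add: comp_self)
    then have "v2 \<in> ?c' v1" using eq by simp
    then have p: "(v1, v2) \<in> (insert (a, b) (insert (b, a) (R F)))\<^sup>*"
      unfolding cmp_def R_insert by auto
    have na1: "(a, v1) \<notin> (R F)\<^sup>*" and na2: "(a, v2) \<notin> (R F)\<^sup>*" using v unfolding cmp_def by auto
    have na1': "(v1, a) \<notin> (R F)\<^sup>*" using na1 R_sym by metis
    let ?S = "R F"
    have s1: "\<And>x y. (x, y) \<in> (insert (b, a) ?S)\<^sup>* \<Longrightarrow> (x, y) \<in> ?S\<^sup>* \<or> ((x, b) \<in> ?S\<^sup>* \<and> (a, y) \<in> ?S\<^sup>*)"
      by (simp add: rtrancl_insert)
    have "(v1, v2) \<in> (insert (b, a) ?S)\<^sup>* \<or> ((v1, a) \<in> (insert (b, a) ?S)\<^sup>* \<and> (b, v2) \<in> (insert (b, a) ?S)\<^sup>*)"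
      using p by (simp add: rtrancl_insert)
    then have "(v1, v2) \<in> (R F)\<^sup>*"
    proof
      assume "(v1, v2) \<in> (insert (b, a) ?S)\<^sup>*"
      then show ?thesis using s1 na2 by blast
    next
      assume c: "(v1, a) \<in> (insert (b, a) ?S)\<^sup>* \<and> (b, v2) \<in> (insert (b, a) ?S)\<^sup>*"
      then have 1: "(v1, b) \<in> ?S\<^sup>*" using s1 na1' by blast
      have "(b, v2) \<in> ?S\<^sup>*" using c s1 na2 by blast
      then show ?thesis using 1 rtrancl_trans by metis
    qed
    then have "v2 \<in> ?c v1" using v unfolding cmp_def by auto
    then show "?c v1 = ?c v2" using comp_mem_eq[of v2 V F v1] by simp
  qed
  moreover have "card (?c' ` (V - ?A)) \<le> card (?c' ` V)" using fV by (simp add: card_mono image_mono)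
  moreover have "card (?c ` V) \<le> card (?c ` (V - ?A)) + card (?c ` (V \<inter> ?A))"
    using card_Un_le[of "?c ` (V - ?A)" "?c ` (V \<inter> ?A)"] calculation(1) by simp
  ultimately show ?thesis by linarith
qed

lemma comps_edges:
  assumes fV: "finite V" and fE: "finite E" and s: "E \<subseteq> V \<times> V"
  shows "card V \<le> card (components V E) + card E"
  using fE s
proof (induction E rule: finite_subset_induct)
  case empty
  have "cmp V {} ` V = (\<lambda>v. {v}) ` V"
    using iso_comp[of _ V "{}"] unfolding adj_def by auto
  moreover have "card ((\<lambda>v. {v}) ` V) = card V" by (rule card_image) (auto simp: inj_on_def)
  ultimately show ?case unfolding components_eq by simp
next
  case (insert e F)
  obtain a b where e: "e = (a, b)" by force
  have "a \<in> V" using insert e by auto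
  then have "card (cmp V F ` V) \<le> card (cmp V (insert e F) ` V) + 1"
    using comps_step[OF fV] e by simp
  then show ?case using insert unfolding components_eq by simp
qed

definition Iso :: "'a set \<Rightarrow> ('a \<times> 'a) set \<Rightarrow> 'a set" where
  "Iso V E = {v \<in> V. \<not> (\<exists>z. adj E v z)}"
definition Wi :: "'a set \<Rightarrow> ('a \<times> 'a) set \<Rightarrow> 'a set" where
  "Wi V E = {v \<in> V. interior V E v}"
definition Dn :: "'a set \<Rightarrow> ('a \<times> 'a) set \<Rightarrow> nat" where
  "Dn V E = card (EB E) + card (OT V E) + card (IT V E)"

lemma vert_count:
  assumes xy: "xy_tdg x y V E"
  shows "card V + card (Iso V E) = x + y + card (Wi V E)"
proof -
  have t: "tdg V E" and cx: "card {v \<in> V. initial V E v} = x"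
    and cy: "card {v \<in> V. terminal V E v} = y"
    using xy unfolding xy_tdg_def by auto
  have fV: "finite V" using t unfolding tdg_def by auto
  let ?I = "{v \<in> V. initial V E v}" and ?T = "{v \<in> V. terminal V E v}"
  have "?I \<inter> ?T = Iso V E" unfolding Iso_def initial_def terminal_def adj_def by auto
  moreover have "card (?I \<union> ?T) + card (?I \<inter> ?T) = x + y"
    using card_Un_Int[of ?I ?T] fV cx cy by simp
  moreover have "V = (?I \<union> ?T) \<union> Wi V E" unfolding Wi_def interior_def by auto
  moreover have "(?I \<union> ?T) \<inter> Wi V E = {}" unfolding Wi_def interior_def by auto
  moreover have "finite (?I \<union> ?T)" "finite (Wi V E)" using fV unfolding Wi_def by auto
  ultimately have "card V = card (?I \<union> ?T) + card (Wi V E)"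
    by (metis card_Un_disjoint)
  then show ?thesis using \<open>?I \<inter> ?T = Iso V E\<close> \<open>card (?I \<union> ?T) + card (?I \<inter> ?T) = x + y\<close> by simp
qed

lemma D_upper:
  assumes m: "minimal_xy_tdg x y V E"
  shows "Dn V E \<le> card (Wi V E) + card (nontriv_components V E)"
proof -
  have xy: "xy_tdg x y V E" using m unfolding minimal_xy_tdg_def by auto
  then have t: "tdg V E" unfolding xy_tdg_def by auto
  have fV: "finite V" and s: "E \<subseteq> V \<times> V" using t unfolding tdg_def by auto
  have 1: "card E + Dn V E + x + y = 2 * card V" using count_identity[OF m] unfolding Dn_def by simp
  have 2: "card V \<le> card (components V E) + card E" using comps_edges[OF fV tdg_finE[OF t] s] .
  have 3: "card (components V E) = card (nontriv_components V E) + card (Iso V E)"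
    using comps_count[OF t] unfolding Iso_def .
  have 4: "card V + card (Iso V E) = x + y + card (Wi V E)" using vert_count[OF xy] .
  show ?thesis using 1 2 3 4 by linarith
qed

lemma interior_adj: "interior V E w \<Longrightarrow> \<exists>p. (p, w) \<in> E"
  unfolding interior_def initial_def by auto

lemma interior_adj2: "interior V E w \<Longrightarrow> \<exists>q. (w, q) \<in> E"
  unfolding interior_def terminal_def by auto

lemma interior_in_nontriv:
  assumes t: "tdg V E" and w: "interior V E w"
  shows "cmp V E w \<in> nontriv_components V E" "w \<in> cmp V E w"
proof -
  obtain p where "(p, w) \<in> E" using interior_adj[OF w] by auto
  then have "adj E w p" unfolding adj_def by auto
  moreover have "w \<in> V" using w unfolding interior_def by auto
  ultimately show "cmp V E w \<in> nontriv_components V E" using nontriv_eq[OF t] by auto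
  show "w \<in> cmp V E w" using \<open>w \<in> V\<close> by (rule comp_self)
qed

lemma nontriv_is_cmp: "K \<in> nontriv_components V E \<Longrightarrow> v \<in> K \<Longrightarrow> K = cmp V E v"
proof -
  assume K: "K \<in> nontriv_components V E" and v: "v \<in> K"
  then obtain u where "K = cmp V E u" unfolding nontriv_components_def components_eq by auto
  then show ?thesis using v comp_mem_eq by metis
qed

lemma Wi_sub_single:
  assumes t: "tdg V E" and C: "nontriv_components V E = {C}"
  shows "Wi V E \<subseteq> C"
proof
  fix w assume "w \<in> Wi V E"
  then have w: "interior V E w" unfolding Wi_def by auto
  show "w \<in> C" using interior_in_nontriv[OF t w] C by auto
qed

lemma Wi_empty_none:
  assumes t: "tdg V E" and C: "nontriv_components V E = {}"
  shows "Wi V E = {}"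
  using interior_in_nontriv[OF t] C unfolding Wi_def by auto

definition items :: "'a set \<Rightarrow> ('a \<times> 'a) set \<Rightarrow> (('a \<times> 'a) \<times> nat) set" where
  "items V E = (\<lambda>e. (e, 0)) ` EB E \<union> (\<lambda>p. ((p, p), 1)) ` OT V E \<union> (\<lambda>q. ((q, q), 2)) ` IT V E"

definition INs :: "('a \<times> 'a) set \<Rightarrow> 'a \<Rightarrow> (('a \<times> 'a) \<times> nat) set" where
  "INs E w = {((w, w), 2)} \<union> {((p, w), 0) | p. (p, w) \<in> E} \<union> {((p, p), 1) | p. (p, w) \<in> E}"
definition OUTs :: "('a \<times> 'a) set \<Rightarrow> 'a \<Rightarrow> (('a \<times> 'a) \<times> nat) set" where
  "OUTs E w = {((w, w), 1)} \<union> {((w, q), 0) | q. (w, q) \<in> E} \<union> {((q, q), 2) | q. (w, q) \<in> E}"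

lemma items_card:
  assumes t: "tdg V E"
  shows "card (items V E) = Dn V E" "finite (items V E)"
proof -
  have fV: "finite V" using t unfolding tdg_def by auto
  have fE: "finite E" using tdg_finE[OF t] .
  have f1: "finite (EB E)" using fE unfolding EB_def by auto
  have f2: "finite (OT V E)" using fV unfolding OT_def by auto
  have f3: "finite (IT V E)" using fV unfolding IT_def by auto
  have c1: "card ((\<lambda>e. (e, 0::nat)) ` EB E) = card (EB E)" by (rule card_image) (auto simp: inj_on_def)
  have c2: "card ((\<lambda>p. ((p, p), 1::nat)) ` OT V E) = card (OT V E)" by (rule card_image) (auto simp: inj_on_def)
  have c3: "card ((\<lambda>q. ((q, q), 2::nat)) ` IT V E) = card (IT V E)" by (rule card_image) (auto simp: inj_on_def)
  have d1: "(\<lambda>e. (e, 0::nat)) ` EB E \<inter> (\<lambda>p. ((p, p), 1::nat)) ` OT V E = {}" by auto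
  have d2: "((\<lambda>e. (e, 0::nat)) ` EB E \<union> (\<lambda>p. ((p, p), 1::nat)) ` OT V E) \<inter> (\<lambda>q. ((q, q), 2::nat)) ` IT V E = {}" by auto
  show "card (items V E) = Dn V E" unfolding items_def Dn_def
    using f1 f2 f3 c1 c2 c3 d1 d2 by (simp add: card_Un_disjoint)
  show "finite (items V E)" unfolding items_def using f1 f2 f3 by auto
qed

lemma card_ge1: "finite A \<Longrightarrow> a \<in> A \<Longrightarrow> card A \<noteq> 1 \<Longrightarrow> 2 \<le> card A"
  using card_ge2_E two_card by metis

lemma in_item:
  assumes t: "tdg V E" and e: "(p, w) \<in> E"
  shows "\<exists>i \<in> items V E. i \<in> INs E w"
proof -
  have V: "p \<in> V" "w \<in> V" using tdg_sub[OF t e] by auto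
  have pin: "p \<in> inN E w" and wout: "w \<in> outN E p" using e unfolding inN_def outN_def by auto
  show ?thesis
  proof (cases "card (inN E w) = 1")
    case False
    then have "2 \<le> card (inN E w)" using card_ge1[OF fin_inN[OF t] pin] by simp
    then have "((w, w), 2) \<in> items V E" using V unfolding items_def IT_def by auto
    then show ?thesis unfolding INs_def by auto
  next
    case True
    show ?thesis
    proof (cases "card (outN E p) = 1")
      case True
      then have "((p, w), 0) \<in> items V E" using \<open>card (inN E w) = 1\<close> e unfolding items_def EB_def by force
      then show ?thesis unfolding INs_def using e by auto
    next
      case False
      then have "2 \<le> card (outN E p)" using card_ge1[OF fin_outN[OF t] wout] by simp
      then have "((p, p), 1) \<in> items V E" using V unfolding items_def OT_def by auto
      then show ?thesis unfolding INs_def using e by auto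
    qed
  qed
qed

lemma out_item:
  assumes t: "tdg V E" and e: "(w, q) \<in> E"
  shows "\<exists>i \<in> items V E. i \<in> OUTs E w"
proof -
  have V: "w \<in> V" "q \<in> V" using tdg_sub[OF t e] by auto
  have qin: "w \<in> inN E q" and wout: "q \<in> outN E w" using e unfolding inN_def outN_def by auto
  show ?thesis
  proof (cases "card (outN E w) = 1")
    case False
    then have "2 \<le> card (outN E w)" using card_ge1[OF fin_outN[OF t] wout] by simp
    then have "((w, w), 1) \<in> items V E" using V unfolding items_def OT_def by auto
    then show ?thesis unfolding OUTs_def by auto
  next
    case True
    show ?thesis
    proof (cases "card (inN E q) = 1")
      case True
      then have "((w, q), 0) \<in> items V E" using \<open>card (outN E w) = 1\<close> e unfolding items_def EB_def by force
      then show ?thesis unfolding OUTs_def using e by auto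
    next
      case False
      then have "2 \<le> card (inN E q)" using card_ge1[OF fin_inN[OF t] qin] by simp
      then have "((q, q), 2) \<in> items V E" using V unfolding items_def IT_def by auto
      then show ?thesis unfolding OUTs_def using e by auto
    qed
  qed
qed

lemma IN_OUT_disj: "tdg V E \<Longrightarrow> INs E w \<inter> OUTs E w = {}"
  unfolding INs_def OUTs_def using tdg_noloop by fastforce

lemma IN_OUT_edge: "i \<in> INs E w1 \<Longrightarrow> i \<in> OUTs E w2 \<Longrightarrow> (w2, w1) \<in> E"
  unfolding INs_def OUTs_def by auto

lemma IN_IN: "w1 \<noteq> w2 \<Longrightarrow> i \<in> INs E w1 \<Longrightarrow> i \<in> INs E w2 \<Longrightarrow>
    \<exists>u. i = ((u, u), 1) \<and> (u, w1) \<in> E \<and> (u, w2) \<in> E"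
  unfolding INs_def by auto

lemma OUT_OUT: "w1 \<noteq> w2 \<Longrightarrow> i \<in> OUTs E w1 \<Longrightarrow> i \<in> OUTs E w2 \<Longrightarrow>
    \<exists>v. i = ((v, v), 2) \<and> (w1, v) \<in> E \<and> (w2, v) \<in> E"
  unfolding OUTs_def by auto

lemma INs_anchor:
  assumes t: "tdg V E" and w: "w \<in> V" and i: "i \<in> INs E w"
  shows "fst (fst i) \<in> cmp V E w"
proof -
  have s: "E \<subseteq> V \<times> V" using t unfolding tdg_def by auto
  have "fst (fst i) = w \<or> adj E w (fst (fst i))" using i unfolding INs_def adj_def by auto
  then show ?thesis using comp_self[OF w] comp_closed[OF s comp_self[OF w]] by auto
qed

lemma OUTs_anchor:
  assumes t: "tdg V E" and w: "w \<in> V" and i: "i \<in> OUTs E w"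
  shows "fst (fst i) \<in> cmp V E w"
proof -
  have s: "E \<subseteq> V \<times> V" using t unfolding tdg_def by auto
  have "fst (fst i) = w \<or> adj E w (fst (fst i))" using i unfolding OUTs_def adj_def by auto
  then show ?thesis using comp_self[OF w] comp_closed[OF s comp_self[OF w]] by auto
qed

lemma nontriv_item:
  assumes t: "tdg V E" and K: "K \<in> nontriv_components V E"
  shows "\<exists>i \<in> items V E. fst (fst i) \<in> K"
proof -
  have s: "E \<subseteq> V \<times> V" using t unfolding tdg_def by auto
  obtain v z where v: "v \<in> V" "K = cmp V E v" "adj E v z" using K nontriv_eq[OF t] by auto
  have zK: "z \<in> K" using comp_closed[OF s comp_self[OF v(1)] v(3)] v(2) by simp
  have vK: "v \<in> K" using comp_self[OF v(1)] v(2) by simp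
  from v(3) consider "(v, z) \<in> E" | "(z, v) \<in> E" unfolding adj_def by auto
  then show ?thesis
  proof cases
    case 1
    then obtain i where "i \<in> items V E" "i \<in> OUTs E v" using out_item[OF t] by blast
    then show ?thesis using OUTs_anchor[OF t v(1)] v(2) by blast
  next
    case 2
    then obtain i where "i \<in> items V E" "i \<in> INs E v" using in_item[OF t] by blast
    then show ?thesis using INs_anchor[OF t v(1)] v(2) by blast
  qed
qed

lemma nontriv_disj:
  "K1 \<in> nontriv_components V E \<Longrightarrow> K2 \<in> nontriv_components V E \<Longrightarrow> a \<in> K1 \<Longrightarrow> a \<in> K2 \<Longrightarrow> K1 = K2"
proof -
  assume a: "K1 \<in> nontriv_components V E" "K2 \<in> nontriv_components V E" "a \<in> K1" "a \<in> K2"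
  have "K1 = cmp V E a" using nontriv_is_cmp[OF a(1) a(3)] .
  moreover have "K2 = cmp V E a" using nontriv_is_cmp[OF a(2) a(4)] .
  ultimately show "K1 = K2" by simp
qed

lemma A1:
  assumes t: "tdg V E"
  shows "card (nontriv_components V E) \<le> Dn V E"
proof -
  let ?g = "\<lambda>K. SOME i. i \<in> items V E \<and> fst (fst i) \<in> K"
  have g: "\<And>K. K \<in> nontriv_components V E \<Longrightarrow> ?g K \<in> items V E \<and> fst (fst (?g K)) \<in> K"
  proof -
    fix K assume "K \<in> nontriv_components V E"
    then have "\<exists>i. i \<in> items V E \<and> fst (fst i) \<in> K" using nontriv_item[OF t] by blast
    then show "?g K \<in> items V E \<and> fst (fst (?g K)) \<in> K" by (rule someI_ex)
  qed
  have "inj_on ?g (nontriv_components V E)"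
  proof (rule inj_onI)
    fix K1 K2 assume K: "K1 \<in> nontriv_components V E" "K2 \<in> nontriv_components V E" "?g K1 = ?g K2"
    have "fst (fst (?g K1)) \<in> K1" using g[OF K(1)] by simp
    moreover have "fst (fst (?g K1)) \<in> K2" using g[OF K(2)] K(3) by simp
    ultimately show "K1 = K2" using nontriv_disj[OF K(1) K(2)] by simp
  qed
  moreover have "?g ` nontriv_components V E \<subseteq> items V E" using g by auto
  ultimately have "card (nontriv_components V E) \<le> card (items V E)"
    by (rule card_inj_on_le) (rule items_card(2)[OF t])
  then show ?thesis using items_card(1)[OF t] by simp
qed

lemma three_card: "finite A \<Longrightarrow> a \<in> A \<Longrightarrow> b \<in> A \<Longrightarrow> c \<in> A \<Longrightarrow> a \<noteq> b \<Longrightarrow> a \<noteq> c \<Longrightarrow> b \<noteq> c \<Longrightarrow> 3 \<le> card A"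
proof -
  assume "finite A" "a \<in> A" "b \<in> A" "c \<in> A" "a \<noteq> b" "a \<noteq> c" "b \<noteq> c"
  then have "card {a, b, c} \<le> card A" by (intro card_mono) auto
  then show ?thesis using \<open>a \<noteq> b\<close> \<open>a \<noteq> c\<close> \<open>b \<noteq> c\<close> by simp
qed

lemma A2:
  assumes t: "tdg V E" and c2: "card (nontriv_components V E) = 2" and w: "interior V E w"
  shows "3 \<le> Dn V E"
proof -
  have wV: "w \<in> V" using w unfolding interior_def by auto
  let ?K0 = "cmp V E w"
  have K0: "?K0 \<in> nontriv_components V E" using interior_in_nontriv[OF t w] by auto
  obtain K1 where K1: "K1 \<in> nontriv_components V E" "K1 \<noteq> ?K0"
  proof -
    have "nontriv_components V E \<noteq> {?K0}" using c2 by auto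
    then show ?thesis using K0 that by blast
  qed
  obtain i0 where i0: "i0 \<in> items V E" "fst (fst i0) \<in> K1" using nontriv_item[OF t K1(1)] by auto
  obtain p where p: "(p, w) \<in> E" using interior_adj[OF w] by auto
  obtain q where q: "(w, q) \<in> E" using interior_adj2[OF w] by auto
  obtain i1 where i1: "i1 \<in> items V E" "i1 \<in> INs E w" using in_item[OF t p] by auto
  obtain o1 where o1: "o1 \<in> items V E" "o1 \<in> OUTs E w" using out_item[OF t q] by auto
  have a1: "fst (fst i1) \<in> ?K0" using INs_anchor[OF t wV i1(2)] .
  have a2: "fst (fst o1) \<in> ?K0" using OUTs_anchor[OF t wV o1(2)] .
  have "i1 \<noteq> o1" using IN_OUT_disj[OF t, of w] i1 o1 by auto
  moreover have "i0 \<noteq> i1"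
  proof
    assume "i0 = i1"
    then have "fst (fst i0) \<in> ?K0" using a1 by simp
    then show False using nontriv_disj[OF K1(1) K0 i0(2)] K1(2) by simp
  qed
  moreover have "i0 \<noteq> o1"
  proof
    assume "i0 = o1"
    then have "fst (fst i0) \<in> ?K0" using a2 by simp
    then show False using nontriv_disj[OF K1(1) K0 i0(2)] K1(2) by simp
  qed
  ultimately have "3 \<le> card (items V E)" using three_card[OF items_card(2)[OF t] i0(1) i1(1) o1(1)] by simp
  then show ?thesis using items_card(1)[OF t] by simp
qed

lemma pair_lemma: "finite A \<Longrightarrow> card A \<le> 2 \<Longrightarrow> a \<in> A \<Longrightarrow> b \<in> A \<Longrightarrow> a \<noteq> b \<Longrightarrow> c \<in> A \<Longrightarrow> c = a \<or> c = b"
proof (rule ccontr)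
  assume h: "finite A" "card A \<le> 2" "a \<in> A" "b \<in> A" "a \<noteq> b" "c \<in> A" "\<not> (c = a \<or> c = b)"
  then have "3 \<le> card A" using three_card[of A a b c] by auto
  then show False using h(2) by simp
qed

lemma same_items:
  assumes t: "tdg V E" and D: "Dn V E \<le> 2" and ne: "wa \<noteq> wb"
    and wb: "interior V E wb"
    and ia: "ia \<in> items V E" "ia \<in> INs E wa" and oa: "oa \<in> items V E" "oa \<in> OUTs E wa"
  shows "ia \<in> INs E wb \<and> oa \<in> OUTs E wb"
proof -
  have fI: "finite (items V E)" and cI: "card (items V E) \<le> 2" using items_card[OF t] D by auto
  have iao: "ia \<noteq> oa" using IN_OUT_disj[OF t, of wa] ia oa by auto
  obtain p where p: "(p, wb) \<in> E" using interior_adj[OF wb] by auto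
  obtain q where q: "(wb, q) \<in> E" using interior_adj2[OF wb] by auto
  obtain ib where ib: "ib \<in> items V E" "ib \<in> INs E wb" using in_item[OF t p] by auto
  obtain ob where ob: "ob \<in> items V E" "ob \<in> OUTs E wb" using out_item[OF t q] by auto
  have ibo: "ib \<noteq> ob" using IN_OUT_disj[OF t, of wb] ib ob by auto
  have 1: "ib = ia \<or> ib = oa" using pair_lemma[OF fI cI ia(1) oa(1) iao ib(1)] .
  have 2: "ob = ia \<or> ob = oa" using pair_lemma[OF fI cI ia(1) oa(1) iao ob(1)] .
  have "ib = ia"
  proof (rule ccontr)
    assume "ib \<noteq> ia"
    then have "ib = oa" using 1 by simp
    then have e1: "(wa, wb) \<in> E" using IN_OUT_edge ib(2) oa(2) by metis
    have "ob = ia" using 2 ibo \<open>ib = oa\<close> by auto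
    then have "(wb, wa) \<in> E" using IN_OUT_edge ob(2) ia(2) by metis
    then show False using tdg_no2cycle[OF t e1] by simp
  qed
  moreover have "ob = oa"
  proof (rule ccontr)
    assume "ob \<noteq> oa"
    then have "ob = ia" using 2 by simp
    then have e1: "(wb, wa) \<in> E" using IN_OUT_edge ob(2) ia(2) by metis
    have "ib = oa" using 1 ibo \<open>ob = ia\<close> by auto
    then have "(wa, wb) \<in> E" using IN_OUT_edge ib(2) oa(2) by metis
    then show False using tdg_no2cycle[OF t e1] by simp
  qed
  ultimately show ?thesis using ib ob by simp
qed

lemma INs_tag1: "((u, u), 1) \<in> INs E w \<Longrightarrow> (u, w) \<in> E"
  unfolding INs_def by auto
lemma OUTs_tag2: "((v, v), 2) \<in> OUTs E w \<Longrightarrow> (w, v) \<in> E"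
  unfolding OUTs_def by auto

lemma A3:
  assumes t: "tdg V E" and D: "Dn V E \<le> 2" and ne: "w1 \<noteq> w2"
    and w1: "interior V E w1" and w2: "interior V E w2"
  shows "\<exists>u v. initial V E u \<and> terminal V E v \<and> (\<forall>w. interior V E w \<longrightarrow> (u, w) \<in> E \<and> (w, v) \<in> E)"
proof -
  obtain p where p: "(p, w1) \<in> E" using interior_adj[OF w1] by auto
  obtain q where q: "(w1, q) \<in> E" using interior_adj2[OF w1] by auto
  obtain i1 where i1: "i1 \<in> items V E" "i1 \<in> INs E w1" using in_item[OF t p] by auto
  obtain o1 where o1: "o1 \<in> items V E" "o1 \<in> OUTs E w1" using out_item[OF t q] by auto
  have s2: "i1 \<in> INs E w2 \<and> o1 \<in> OUTs E w2" using same_items[OF t D ne w2 i1 o1] .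
  obtain u where u: "i1 = ((u, u), 1)" "(u, w1) \<in> E" "(u, w2) \<in> E" using IN_IN[OF ne i1(2)] s2 by auto
  obtain v where v: "o1 = ((v, v), 2)" "(w1, v) \<in> E" "(w2, v) \<in> E" using OUT_OUT[OF ne o1(2)] s2 by auto
  have all: "\<And>w. interior V E w \<Longrightarrow> (u, w) \<in> E \<and> (w, v) \<in> E"
  proof -
    fix w assume w: "interior V E w"
    show "(u, w) \<in> E \<and> (w, v) \<in> E"
    proof (cases "w = w1")
      case True then show ?thesis using u v by simp
    next
      case False
      then have "i1 \<in> INs E w \<and> o1 \<in> OUTs E w" using same_items[OF t D _ w i1 o1] by metis
      then show ?thesis using u v INs_tag1 OUTs_tag2 by metis
    qed
  qed
  have uV: "u \<in> V" and vV: "v \<in> V" using tdg_sub[OF t u(2)] tdg_sub[OF t v(2)] by auto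
  have "initial V E u"
  proof (rule ccontr)
    assume "\<not> initial V E u"
    moreover have "\<not> terminal V E u" using u(2) unfolding terminal_def by auto
    ultimately have iu: "interior V E u" using uV unfolding interior_def by auto
    have "u \<noteq> w1" using tdg_noloop[OF t u(2)] .
    then have "i1 \<in> INs E u" using same_items[OF t D _ iu i1 o1] by metis
    then have "(u, u) \<in> E" using u INs_tag1 by metis
    then show False using tdg_noloop[OF t] by metis
  qed
  moreover have "terminal V E v"
  proof (rule ccontr)
    assume "\<not> terminal V E v"
    moreover have "\<not> initial V E v" using v(2) unfolding initial_def by auto
    ultimately have iv: "interior V E v" using vV unfolding interior_def by auto
    have "v \<noteq> w1" using tdg_noloop[OF t v(2)] by metis
    then have "o1 \<in> OUTs E v" using same_items[OF t D _ iv i1 o1] by metis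
    then have "(v, v) \<in> E" using v OUTs_tag2 by metis
    then show False using tdg_noloop[OF t] by metis
  qed
  ultimately show ?thesis using all by blast
qed

lemma initial_adj: "initial V E a \<Longrightarrow> adj E a z \<Longrightarrow> (a, z) \<in> E"
  unfolding initial_def adj_def by auto
lemma terminal_adj: "terminal V E a \<Longrightarrow> adj E a z \<Longrightarrow> (z, a) \<in> E"
  unfolding terminal_def adj_def by auto

lemma Ac:
  assumes m: "minimal_xy_tdg x y V E" and W: "Wi V E = {w}"
  shows "let P = {a. initial V E a \<and> adj E w a};
             Q = {b. terminal V E b \<and> adj E w b} in
          card P > 0 \<and> card Q > 0
          \<and> (card P = 1 \<longrightarrow> (\<forall>a \<in> P. \<forall>z. adj E a z \<longrightarrow> z = w \<or> terminal V E z))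
          \<and> (card Q = 1 \<longrightarrow> (\<forall>b \<in> Q. \<forall>z. adj E b z \<longrightarrow> z = w \<or> initial V E z))
          \<and> (card P > 1 \<longrightarrow> (\<forall>a \<in> P. \<forall>z. adj E a z \<longrightarrow> z = w))
          \<and> (card Q > 1 \<longrightarrow> (\<forall>b \<in> Q. \<forall>z. adj E b z \<longrightarrow> z = w))"
proof -
  have t: "tdg V E" using m unfolding minimal_xy_tdg_def xy_tdg_def by auto
  have fV: "finite V" using t unfolding tdg_def by auto
  have w: "interior V E w" using W unfolding Wi_def by auto
  have intw: "\<And>z. interior V E z \<Longrightarrow> z = w" using W unfolding Wi_def interior_def by auto
  define P where "P = {a. initial V E a \<and> adj E w a}"
  define Q where "Q = {b. terminal V E b \<and> adj E w b}"
  have fP: "finite P" using fV unfolding P_def initial_def by (auto intro: finite_subset)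
  have fQ: "finite Q" using fV unfolding Q_def terminal_def by (auto intro: finite_subset)
  obtain p where p: "(p, w) \<in> E" using interior_adj[OF w] by auto
  obtain q where q: "(w, q) \<in> E" using interior_adj2[OF w] by auto
  have "initial V E p"
  proof (rule ccontr)
    assume "\<not> initial V E p"
    moreover have "\<not> terminal V E p" "p \<in> V" using p tdg_sub[OF t p] unfolding terminal_def by auto
    ultimately have "p = w" using intw unfolding interior_def by auto
    then show False using tdg_noloop[OF t p] by simp
  qed
  then have "p \<in> P" unfolding P_def adj_def using p by auto
  then have P0: "card P > 0" using fP by (auto simp: card_gt_0_iff)
  have "terminal V E q"
  proof (rule ccontr)
    assume "\<not> terminal V E q"
    moreover have "\<not> initial V E q" "q \<in> V" using q tdg_sub[OF t q] unfolding initial_def by auto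
    ultimately have "q = w" using intw unfolding interior_def by auto
    then show False using tdg_noloop[OF t q] by simp
  qed
  then have "q \<in> Q" unfolding Q_def adj_def using q by auto
  then have Q0: "card Q > 0" using fQ by (auto simp: card_gt_0_iff)
  have P1: "\<forall>a \<in> P. \<forall>z. adj E a z \<longrightarrow> z = w \<or> terminal V E z"
  proof (intro ballI allI impI)
    fix a z assume a: "a \<in> P" and az: "adj E a z"
    have e: "(a, z) \<in> E" using initial_adj a az unfolding P_def by auto
    have "\<not> initial V E z" "z \<in> V" using e tdg_sub[OF t e] unfolding initial_def by auto
    then show "z = w \<or> terminal V E z" using intw unfolding interior_def by auto
  qed
  have Q1: "\<forall>b \<in> Q. \<forall>z. adj E b z \<longrightarrow> z = w \<or> initial V E z"
  proof (intro ballI allI impI)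
    fix b z assume b: "b \<in> Q" and bz: "adj E b z"
    have e: "(z, b) \<in> E" using terminal_adj b bz unfolding Q_def by auto
    have "\<not> terminal V E z" "z \<in> V" using e tdg_sub[OF t e] unfolding terminal_def by auto
    then show "z = w \<or> initial V E z" using intw unfolding interior_def by auto
  qed
  have P2: "card P > 1 \<longrightarrow> (\<forall>a \<in> P. \<forall>z. adj E a z \<longrightarrow> z = w)"
  proof (intro impI ballI allI)
    fix a z assume c: "card P > 1" and a: "a \<in> P" and az: "adj E a z"
    have aw: "(a, w) \<in> E" using a initial_adj unfolding P_def adj_def by (metis (mono_tags, lifting) initial_def mem_Collect_eq)
    obtain a' where a': "a' \<in> P" "a' \<noteq> a" using card_ge2_E[OF fP a] c by auto
    have a'w: "(a', w) \<in> E" using a'(1) unfolding P_def adj_def initial_def by auto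
    have "2 \<le> card (inN E w)" using two_card[OF fin_inN[OF t], of a w a'] aw a'w a'(2) unfolding inN_def by auto
    then have "card (outN E a) = 1" using min_edge[OF m aw] by auto
    moreover have "(a, z) \<in> E" using initial_adj a az unfolding P_def by auto
    ultimately show "z = w" using card1_unique aw unfolding outN_def by (metis mem_Collect_eq)
  qed
  have Q2: "card Q > 1 \<longrightarrow> (\<forall>b \<in> Q. \<forall>z. adj E b z \<longrightarrow> z = w)"
  proof (intro impI ballI allI)
    fix b z assume c: "card Q > 1" and b: "b \<in> Q" and bz: "adj E b z"
    have bw: "(w, b) \<in> E" using b unfolding Q_def adj_def terminal_def by auto
    obtain b' where b': "b' \<in> Q" "b' \<noteq> b" using card_ge2_E[OF fQ b] c by auto
    have b'w: "(w, b') \<in> E" using b'(1) unfolding Q_def adj_def terminal_def by auto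
    have "2 \<le> card (outN E w)" using two_card[OF fin_outN[OF t], of b w b'] bw b'w b'(2) unfolding outN_def by auto
    then have "card (inN E b) = 1" using min_edge[OF m bw] by auto
    moreover have "(z, b) \<in> E" using terminal_adj b bz unfolding Q_def by auto
    ultimately show "z = w" using card1_unique bw unfolding inN_def by (metis mem_Collect_eq)
  qed
  show ?thesis unfolding Let_def P_def[symmetric] Q_def[symmetric] using P0 Q0 P1 Q1 P2 Q2 by simp
qed

lemma item_anchor:
  assumes t: "tdg V E" and i: "i \<in> items V E"
  shows "fst (fst i) \<in> V \<and> (\<exists>z. adj E (fst (fst i)) z)"
proof -
  from i consider (a) e where "e \<in> EB E" "i = (e, 0)"
    | (b) p where "p \<in> OT V E" "i = ((p, p), 1)"
    | (c) q where "q \<in> IT V E" "i = ((q, q), 2)"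
    unfolding items_def by auto
  then show ?thesis
  proof cases
    case a
    obtain p q where pq: "e = (p, q)" by force
    then have "(p, q) \<in> E" "fst (fst i) = p" using a unfolding EB_def by auto
    then show ?thesis using tdg_sub[OF t] unfolding adj_def by blast
  next
    case b
    then have "card (outN E p) \<ge> 2" "p \<in> V" unfolding OT_def by auto
    then obtain q where "q \<in> outN E p" by (metis card.empty ex_in_conv not_numeral_le_zero)
    then show ?thesis using b \<open>p \<in> V\<close> unfolding adj_def outN_def by auto
  next
    case c
    then have "card (inN E q) \<ge> 2" "q \<in> V" unfolding IT_def by auto
    then obtain p where "p \<in> inN E q" by (metis card.empty ex_in_conv not_numeral_le_zero)
    then show ?thesis using c \<open>q \<in> V\<close> unfolding adj_def inN_def by auto
  qed
qed

lemma anchor_in_C: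
  assumes t: "tdg V E" and C: "nontriv_components V E = {C}" and i: "i \<in> items V E"
  shows "fst (fst i) \<in> C"
proof -
  obtain z where a: "fst (fst i) \<in> V" "adj E (fst (fst i)) z" using item_anchor[OF t i] by auto
  then have "cmp V E (fst (fst i)) \<in> nontriv_components V E" using nontriv_eq[OF t] by auto
  then show ?thesis using C comp_self[OF a(1)] by auto
qed

lemma B4:
  assumes m: "minimal_xy_tdg x y V E" and C: "nontriv_components V E = {C}"
    and uC: "u \<in> C" and u: "initial V E u" and vC: "v \<in> C" and v: "terminal V E v"
    and W2: "2 \<le> card {w \<in> C. interior V E w}"
    and adjs: "\<forall>w \<in> C. interior V E w \<longrightarrow> adj E u w \<and> adj E v w"
  shows "Dn V E \<le> 2"
proof -
  have t: "tdg V E" using m unfolding minimal_xy_tdg_def xy_tdg_def by auto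
  have WC: "Wi V E \<subseteq> C" using Wi_sub_single[OF t C] .
  have intE: "\<And>w. interior V E w \<Longrightarrow> (u, w) \<in> E \<and> (w, v) \<in> E"
  proof -
    fix w assume w: "interior V E w"
    then have "w \<in> C" using WC unfolding Wi_def interior_def by auto
    then have "adj E u w \<and> adj E v w" using adjs w by auto
    then show "(u, w) \<in> E \<and> (w, v) \<in> E" using initial_adj[OF u] terminal_adj[OF v] by auto
  qed
  obtain w1 w2 where w12: "w1 \<noteq> w2" "interior V E w1" "interior V E w2"
  proof -
    have "finite {w \<in> C. interior V E w}"
      using t C unfolding tdg_def nontriv_components_def components_eq
      by (metis (no_types, lifting) card.infinite W2 not_numeral_le_zero)
    then obtain w1 where "w1 \<in> {w \<in> C. interior V E w}" using W2
      by (metis card.empty empty_iff not_numeral_le_zero subsetI subset_antisym)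
    moreover then obtain w2 where "w2 \<in> {w \<in> C. interior V E w}" "w2 \<noteq> w1"
      using card_ge2_E[OF \<open>finite _\<close>] W2 by (metis numeral_le_one_iff semiring_norm(69))
    ultimately show ?thesis using that by auto
  qed
  have ou: "2 \<le> card (outN E u)"
    using two_card[OF fin_outN[OF t], of w1 u w2] intE w12 unfolding outN_def by auto
  have iv: "2 \<le> card (inN E v)"
    using two_card[OF fin_inN[OF t], of w1 v w2] intE w12 unfolding inN_def by auto
  have inu: "\<And>z. (u, z) \<in> E \<Longrightarrow> inN E z = {u}"
  proof -
    fix z assume e: "(u, z) \<in> E"
    then have "card (inN E z) = 1" using min_edge[OF m e] ou by auto
    moreover have "u \<in> inN E z" using e unfolding inN_def by auto
    ultimately show "inN E z = {u}" by (rule card1_eq)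
  qed
  have outv: "\<And>z. (z, v) \<in> E \<Longrightarrow> outN E z = {v}"
  proof -
    fix z assume e: "(z, v) \<in> E"
    then have "card (outN E z) = 1" using min_edge[OF m e] iv by auto
    moreover have "v \<in> outN E z" using e unfolding outN_def by auto
    ultimately show "outN E z = {v}" by (rule card1_eq)
  qed
  define S where "S = {a. a = u \<or> a = v \<or> (interior V E a \<and> inN E a = {u} \<and> outN E a = {v})
      \<or> (terminal V E a \<and> inN E a = {u}) \<or> (initial V E a \<and> outN E a = {v})}"
  have uS: "u \<in> S" unfolding S_def by simp
  have cl: "\<And>a z. a \<in> S \<Longrightarrow> adj E a z \<Longrightarrow> z \<in> S"
  proof -
    fix a z assume a: "a \<in> S" and az: "adj E a z"
    have classify: "\<And>z. z \<in> V \<Longrightarrow> interior V E z \<or> initial V E z \<or> terminal V E z"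
      unfolding interior_def by auto
    from a consider "a = u" | "a = v" | "interior V E a \<and> inN E a = {u} \<and> outN E a = {v}"
      | "terminal V E a \<and> inN E a = {u}" | "initial V E a \<and> outN E a = {v}"
      unfolding S_def by auto
    then show "z \<in> S"
    proof cases
      case 1
      then have e: "(u, z) \<in> E" using initial_adj[OF u] az by simp
      have zV: "z \<in> V" using tdg_sub[OF t e] by simp
      have ni: "\<not> initial V E z" using e unfolding initial_def by auto
      show ?thesis
      proof (cases "interior V E z")
        case True then show ?thesis using intE[OF True] inu outv unfolding S_def by auto
      next
        case False then have "terminal V E z" using classify[OF zV] ni by auto
        then show ?thesis using inu[OF e] unfolding S_def by auto
      qed
    next
      case 2
      then have e: "(z, v) \<in> E" using terminal_adj[OF v] az by simp
      have zV: "z \<in> V" using tdg_sub[OF t e] by simp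
      have nt: "\<not> terminal V E z" using e unfolding terminal_def by auto
      show ?thesis
      proof (cases "interior V E z")
        case True then show ?thesis using intE[OF True] inu outv unfolding S_def by auto
      next
        case False then have "initial V E z" using classify[OF zV] nt by auto
        then show ?thesis using outv[OF e] unfolding S_def by auto
      qed
    next
      case 3
      then have "(a, z) \<in> E \<or> (z, a) \<in> E" using az unfolding adj_def by auto
      then have "z = v \<or> z = u" using 3 unfolding inN_def outN_def by auto
      then show ?thesis unfolding S_def by auto
    next
      case 4
      then have "(z, a) \<in> E" using terminal_adj az by auto
      then have "z = u" using 4 unfolding inN_def by auto
      then show ?thesis unfolding S_def by auto
    next
      case 5
      then have "(a, z) \<in> E" using initial_adj az by auto
      then have "z = v" using 5 unfolding outN_def by auto
      then show ?thesis unfolding S_def by auto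
    qed
  qed
  have CS: "C \<subseteq> S"
  proof -
    have "C = cmp V E u" using nontriv_is_cmp[of C V E u] C uC by auto
    then show ?thesis using comp_closure[of S E u V] cl uS by auto
  qed
  have "items V E \<subseteq> {((u, u), 1), ((v, v), 2)}"
  proof
    fix i assume i: "i \<in> items V E"
    have aS: "fst (fst i) \<in> S" using anchor_in_C[OF t C i] CS by auto
    have ov: "outN E v = {}" using v unfolding terminal_def outN_def by auto
    have iu: "inN E u = {}" using u unfolding initial_def inN_def by auto
    have tout: "\<And>a. terminal V E a \<Longrightarrow> outN E a = {}" unfolding terminal_def outN_def by auto
    have iin: "\<And>a. initial V E a \<Longrightarrow> inN E a = {}" unfolding initial_def inN_def by auto
    from i consider (a) e where "e \<in> EB E" "i = (e, 0)"
      | (b) p where "p \<in> OT V E" "i = ((p, p), 1)"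
      | (c) q where "q \<in> IT V E" "i = ((q, q), 2)"
      unfolding items_def by auto
    then show "i \<in> {((u, u), 1), ((v, v), 2)}"
    proof cases
      case a
      obtain p q where pq: "e = (p, q)" by force
      have e: "(p, q) \<in> E" "card (outN E p) = 1" "card (inN E q) = 1"
        using a pq unfolding EB_def by auto
      have pS: "p \<in> S" using aS a pq by simp
      have qo: "q \<in> outN E p" using e unfolding outN_def by auto
      have "q = v" if "outN E p = {v}" using that qo by auto
      then have False using pS e ou iv ov tout[of p] qo unfolding S_def by auto
      then show ?thesis by simp
    next
      case b
      have pS: "p \<in> S" using aS b by simp
      have "card (outN E p) \<ge> 2" using b unfolding OT_def by auto
      then have "p = u" using pS ov tout[of p] unfolding S_def by auto
      then show ?thesis using b by simp
    next
      case c
      have qS: "q \<in> S" using aS c by simp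
      have "card (inN E q) \<ge> 2" using c unfolding IT_def by auto
      then have "q = v" using qS iu iin[of q] unfolding S_def by auto
      then show ?thesis using c by simp
    qed
  qed
  then have "card (items V E) \<le> card {((u, u), 1::nat), ((v, v), 2)}" by (intro card_mono) auto
  also have "\<dots> \<le> 2" by (simp add: card_insert_le_m1)
  finally show ?thesis using items_card(1)[OF t] by simp
qed

lemma rank_acyclic:
  assumes "\<And>p q. (p, q) \<in> E \<Longrightarrow> (r p :: nat) < r q"
  shows "acyclic E"
proof -
  have "\<And>p q. (p, q) \<in> E\<^sup>+ \<Longrightarrow> r p < r q"
  proof -
    fix p q assume "(p, q) \<in> E\<^sup>+"
    then show "r p < r q"
    proof (induction rule: trancl_induct)
      case (base y) then show ?case using assms by simp
    next
      case (step y z) then show ?case using assms[of y z] by simp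
    qed
  qed
  then show ?thesis unfolding acyclic_def by blast
qed

definition cE :: "nat \<Rightarrow> nat \<Rightarrow> nat \<Rightarrow> (nat \<times> nat) set" where
  "cE a b m = (\<lambda>i. (0, i)) ` {a+1..<a+m+b} \<union> (\<lambda>i. (i, 1)) ` {2..<a+1+m}"

lemma cE_mem: "(p, q) \<in> cE a b m \<longleftrightarrow> (p = 0 \<and> a + 1 \<le> q \<and> q < a + m + b) \<or> (q = 1 \<and> 2 \<le> p \<and> p < a + 1 + m)"
  unfolding cE_def by auto

lemma constr_nat:
  fixes s :: nat
  assumes a: "a \<ge> 1" and b: "b \<ge> 1" and m: "m \<ge> 1"
  defines "N \<equiv> a + b + m + s"
  shows "minimal_xy_tdg (a + s) (b + s) {0..<N} (cE a b m)"
    and "card (cE a b m) = (m + b - 1) + (a + m - 1)"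
proof -
  let ?E = "cE a b m" and ?V = "{0..<N}"
  have t: "tdg ?V ?E" unfolding tdg_def
  proof (intro conjI)
    show "finite ?V" by simp
    show "?E \<subseteq> ?V \<times> ?V" unfolding N_def using b by (auto simp: cE_mem)
    show "acyclic ?E"
      by (rule rank_acyclic[where r = "\<lambda>i. if i = 0 then 0 else if i = 1 then 2 else 1"]) (auto simp: cE_mem)
  qed
  have I: "{v \<in> ?V. initial ?V ?E v} = {0} \<union> {2..<a+1} \<union> {a+m+b..<N}"
  proof (rule set_eqI)
    fix v
    have "initial ?V ?E v \<longleftrightarrow> v < N \<and> \<not> (v \<ge> a + 1 \<and> v < a + m + b) \<and> v \<noteq> 1"
      unfolding initial_def cE_mem using a m by (auto; presburger)
    then show "v \<in> {v \<in> ?V. initial ?V ?E v} \<longleftrightarrow> v \<in> {0} \<union> {2..<a+1} \<union> {a+m+b..<N}"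
      unfolding N_def using a b m by auto
  qed
  have T: "{v \<in> ?V. terminal ?V ?E v} = {1} \<union> {a+1+m..<a+m+b} \<union> {a+m+b..<N}"
  proof (rule set_eqI)
    fix v
    have "terminal ?V ?E v \<longleftrightarrow> v < N \<and> \<not> (v \<ge> 2 \<and> v < a + 1 + m) \<and> v \<noteq> 0"
      unfolding terminal_def cE_mem using b m by (auto; presburger)
    then show "v \<in> {v \<in> ?V. terminal ?V ?E v} \<longleftrightarrow> v \<in> {1} \<union> {a+1+m..<a+m+b} \<union> {a+m+b..<N}"
      unfolding N_def using a b m by auto
  qed
  have cI: "card ({0} \<union> {2..<a+1} \<union> {a+m+b..<N}) = a + s"
  proof -
    have "card ({0::nat} \<union> {2..<a+1}) = a" using a by (subst card_Un_disjoint) auto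
    moreover have "({0::nat} \<union> {2..<a+1}) \<inter> {a+m+b..<N} = {}" using m by auto
    ultimately show ?thesis unfolding N_def by (subst card_Un_disjoint) auto
  qed
  have cT: "card ({1} \<union> {a+1+m..<a+m+b} \<union> {a+m+b..<N}) = b + s"
  proof -
    have "card ({1::nat} \<union> {a+1+m..<a+m+b}) = b" using a b m by (subst card_Un_disjoint) auto
    moreover have "({1::nat} \<union> {a+1+m..<a+m+b}) \<inter> {a+m+b..<N} = {}" using a b m by auto
    ultimately show ?thesis unfolding N_def by (subst card_Un_disjoint) auto
  qed
  show "minimal_xy_tdg (a + s) (b + s) ?V ?E"
  proof (rule min_intro[OF t])
    show "card {v \<in> ?V. initial ?V ?E v} = a + s" using I cI by simp
    show "card {v \<in> ?V. terminal ?V ?E v} = b + s" using T cT by simp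
    fix p q assume e: "(p, q) \<in> ?E"
    then consider "p = 0 \<and> a + 1 \<le> q \<and> q < a + m + b" | "q = 1 \<and> 2 \<le> p \<and> p < a + 1 + m"
      using cE_mem by blast
    then show "card (outN ?E p) = 1 \<or> card (inN ?E q) = 1"
    proof cases
      case 1
      then have "inN ?E q = {0}" unfolding inN_def cE_mem using a by auto
      then show ?thesis by simp
    next
      case 2
      then have "outN ?E p = {1}" unfolding outN_def cE_mem by auto
      then show ?thesis by simp
    qed
  qed
  have d: "(\<lambda>i. (0::nat, i)) ` {a+1..<a+m+b} \<inter> (\<lambda>i. (i, 1)) ` {2..<a+1+m} = {}" using a by auto
  have c1: "card ((\<lambda>i. (0::nat, i)) ` {a+1..<a+m+b}) = m + b - 1" by (subst card_image) (auto simp: inj_on_def)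
  have c2: "card ((\<lambda>i. (i, 1::nat)) ` {2..<a+1+m}) = a + m - 1" by (subst card_image) (auto simp: inj_on_def)
  show "card ?E = (m + b - 1) + (a + m - 1)" unfolding cE_def
    using d c1 c2 by (subst card_Un_disjoint) auto
qed

lemma transfer:
  assumes inj: "inj_on f V0" and m0: "minimal_xy_tdg x y V0 E0"
  shows "minimal_xy_tdg x y (f ` V0) (map_prod f f ` E0) \<and> card (map_prod f f ` E0) = card E0"
proof -
  have t0: "tdg V0 E0" and cx: "card {v \<in> V0. initial V0 E0 v} = x"
    and cy: "card {v \<in> V0. terminal V0 E0 v} = y"
    using m0 unfolding minimal_xy_tdg_def xy_tdg_def by auto
  have s0: "E0 \<subseteq> V0 \<times> V0" and fV0: "finite V0" using t0 unfolding tdg_def by auto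
  let ?E = "map_prod f f ` E0" and ?V = "f ` V0"
  have key: "\<And>i j. i \<in> V0 \<Longrightarrow> j \<in> V0 \<Longrightarrow> (f i, f j) \<in> ?E \<longleftrightarrow> (i, j) \<in> E0"
  proof
    fix i j assume ij: "i \<in> V0" "j \<in> V0" "(f i, f j) \<in> ?E"
    then obtain i' j' where "(i', j') \<in> E0" "f i = f i'" "f j = f j'" by auto
    moreover then have "i' \<in> V0" "j' \<in> V0" using s0 by auto
    ultimately show "(i, j) \<in> E0" using inj_onD[OF inj, of i i'] inj_onD[OF inj, of j j'] ij by auto
  qed auto
  have dest: "\<And>a b. (a, b) \<in> ?E \<Longrightarrow> \<exists>i j. a = f i \<and> b = f j \<and> (i, j) \<in> E0 \<and> i \<in> V0 \<and> j \<in> V0"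
    using s0 by auto
  have injE: "inj_on (map_prod f f) E0"
  proof (rule inj_onI)
    fix e1 e2 assume e: "e1 \<in> E0" "e2 \<in> E0" "map_prod f f e1 = map_prod f f e2"
    obtain i1 j1 where 1: "e1 = (i1, j1)" by force
    obtain i2 j2 where 2: "e2 = (i2, j2)" by force
    have V: "i1 \<in> V0" "j1 \<in> V0" "i2 \<in> V0" "j2 \<in> V0" using e 1 2 s0 by auto
    have "f i1 = f i2" "f j1 = f j2" using e(3) 1 2 by auto
    then have "i1 = i2" "j1 = j2" using inj_onD[OF inj] V by auto
    then show "e1 = e2" using 1 2 by simp
  qed
  have cE: "card ?E = card E0" using card_image[OF injE] .
  have tr: "\<And>a b. (a, b) \<in> ?E\<^sup>+ \<Longrightarrow> \<exists>i j. a = f i \<and> b = f j \<and> i \<in> V0 \<and> j \<in> V0 \<and> (i, j) \<in> E0\<^sup>+"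
  proof -
    fix a b assume "(a, b) \<in> ?E\<^sup>+"
    then show "\<exists>i j. a = f i \<and> b = f j \<and> i \<in> V0 \<and> j \<in> V0 \<and> (i, j) \<in> E0\<^sup>+"
    proof (induction rule: trancl_induct)
      case (base c)
      then obtain i j where "a = f i \<and> c = f j \<and> (i, j) \<in> E0 \<and> i \<in> V0 \<and> j \<in> V0" using dest[OF base] by blast
      then show ?case by blast
    next
      case (step c d)
      obtain i j where ij: "a = f i" "c = f j" "i \<in> V0" "j \<in> V0" "(i, j) \<in> E0\<^sup>+" using step.IH by blast
      obtain j' k where jk: "c = f j'" "d = f k" "(j', k) \<in> E0" "j' \<in> V0" "k \<in> V0" using dest[OF step.hyps(2)] by blast
      have "j' = j" using inj_onD[OF inj, of j' j] ij jk by simp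
      then have "(i, k) \<in> E0\<^sup>+" using trancl.trancl_into_trancl[OF ij(5), of k] jk(3) by simp
      then show ?case using ij jk by blast
    qed
  qed
  have t: "tdg ?V ?E" unfolding tdg_def
  proof (intro conjI)
    show "finite ?V" using fV0 by simp
    show "?E \<subseteq> ?V \<times> ?V" using s0 by auto
    show "acyclic ?E" unfolding acyclic_def
    proof
      fix a show "(a, a) \<notin> ?E\<^sup>+"
      proof
        assume "(a, a) \<in> ?E\<^sup>+"
        then obtain i j where "a = f i" "a = f j" "i \<in> V0" "j \<in> V0" "(i, j) \<in> E0\<^sup>+" using tr by blast
        then have "(i, i) \<in> E0\<^sup>+" using inj_onD[OF inj, of i j] by simp
        then show False using t0 unfolding tdg_def acyclic_def by blast
      qed
    qed
  qed
  have iniT: "\<And>i. i \<in> V0 \<Longrightarrow> initial ?V ?E (f i) \<longleftrightarrow> initial V0 E0 i"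
  proof -
    fix i assume i: "i \<in> V0"
    have h: "(\<exists>u. (u, f i) \<in> ?E) \<longleftrightarrow> (\<exists>u. (u, i) \<in> E0)"
    proof
      assume "\<exists>u. (u, f i) \<in> ?E"
      then obtain u where "(u, f i) \<in> ?E" ..
      from dest[OF this] obtain j k where "u = f j" "f i = f k" "(j, k) \<in> E0" "j \<in> V0" "k \<in> V0" by blast
      then show "\<exists>u. (u, i) \<in> E0" using inj_onD[OF inj, of i k] i by auto
    next
      assume "\<exists>u. (u, i) \<in> E0"
      then show "\<exists>u. (u, f i) \<in> ?E" by force
    qed
    have "f i \<in> ?V" using i by simp
    then show "initial ?V ?E (f i) \<longleftrightarrow> initial V0 E0 i" unfolding initial_def not_ex[symmetric] h using i by simp
  qed
  have terT: "\<And>i. i \<in> V0 \<Longrightarrow> terminal ?V ?E (f i) \<longleftrightarrow> terminal V0 E0 i"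
  proof -
    fix i assume i: "i \<in> V0"
    have h: "(\<exists>u. (f i, u) \<in> ?E) \<longleftrightarrow> (\<exists>u. (i, u) \<in> E0)"
    proof
      assume "\<exists>u. (f i, u) \<in> ?E"
      then obtain u where "(f i, u) \<in> ?E" ..
      from dest[OF this] obtain j k where "f i = f j" "u = f k" "(j, k) \<in> E0" "j \<in> V0" "k \<in> V0" by blast
      then show "\<exists>u. (i, u) \<in> E0" using inj_onD[OF inj, of i j] i by auto
    next
      assume "\<exists>u. (i, u) \<in> E0"
      then show "\<exists>u. (f i, u) \<in> ?E" by force
    qed
    have "f i \<in> ?V" using i by simp
    then show "terminal ?V ?E (f i) \<longleftrightarrow> terminal V0 E0 i" unfolding terminal_def not_ex[symmetric] h using i by simp
  qed
  have "{v \<in> ?V. initial ?V ?E v} = f ` {i \<in> V0. initial V0 E0 i}" using iniT by auto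
  moreover have "card (f ` {i \<in> V0. initial V0 E0 i}) = x"
    using cx inj by (metis (no_types, lifting) card_image inj_on_subset mem_Collect_eq subsetI)
  ultimately have cx': "card {v \<in> ?V. initial ?V ?E v} = x" by simp
  have "{v \<in> ?V. terminal ?V ?E v} = f ` {i \<in> V0. terminal V0 E0 i}" using terT by auto
  moreover have "card (f ` {i \<in> V0. terminal V0 E0 i}) = y"
    using cy inj by (metis (no_types, lifting) card_image inj_on_subset mem_Collect_eq subsetI)
  ultimately have cy': "card {v \<in> ?V. terminal ?V ?E v} = y" by simp
  have outT: "\<And>i. i \<in> V0 \<Longrightarrow> card (outN ?E (f i)) = card (outN E0 i)"
  proof -
    fix i assume i: "i \<in> V0"
    have "outN ?E (f i) = f ` outN E0 i"
    proof (rule set_eqI, rule iffI)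
      fix z assume "z \<in> outN ?E (f i)"
      then have "(f i, z) \<in> ?E" unfolding outN_def by simp
      from dest[OF this] obtain j k where "f i = f j" "z = f k" "(j, k) \<in> E0" "j \<in> V0" "k \<in> V0" by blast
      then show "z \<in> f ` outN E0 i" using inj_onD[OF inj, of i j] i unfolding outN_def by auto
    qed (auto simp: outN_def)
    moreover have "outN E0 i \<subseteq> V0" using s0 unfolding outN_def by auto
    ultimately show "card (outN ?E (f i)) = card (outN E0 i)"
      using inj by (metis card_image inj_on_subset)
  qed
  have inT: "\<And>i. i \<in> V0 \<Longrightarrow> card (inN ?E (f i)) = card (inN E0 i)"
  proof -
    fix i assume i: "i \<in> V0"
    have "inN ?E (f i) = f ` inN E0 i"
    proof (rule set_eqI, rule iffI)
      fix z assume "z \<in> inN ?E (f i)"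
      then have "(z, f i) \<in> ?E" unfolding inN_def by simp
      from dest[OF this] obtain j k where "z = f j" "f i = f k" "(j, k) \<in> E0" "j \<in> V0" "k \<in> V0" by blast
      then show "z \<in> f ` inN E0 i" using inj_onD[OF inj, of i k] i unfolding inN_def by auto
    qed (auto simp: inN_def)
    moreover have "inN E0 i \<subseteq> V0" using s0 unfolding inN_def by auto
    ultimately show "card (inN ?E (f i)) = card (inN E0 i)"
      using inj by (metis card_image inj_on_subset)
  qed
  have "minimal_xy_tdg x y ?V ?E"
  proof (rule min_intro[OF t cx' cy'])
    fix a b assume "(a, b) \<in> ?E"
    from dest[OF this] obtain i j where ij: "a = f i" "b = f j" "(i, j) \<in> E0" "i \<in> V0" "j \<in> V0" by blast
    then show "card (outN ?E a) = 1 \<or> card (inN ?E b) = 1"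
      using min_edge[OF m0 ij(3)] outT inT by simp
  qed
  then show ?thesis using cE by simp
qed

lemma construct:
  fixes V :: "'a set"
  assumes fV: "finite V" and n: "card V = n" and x: "1 \<le> x" and y: "1 \<le> y"
    and xn: "x + 2 \<le> n" and yn: "y + 2 \<le> n"
  shows "\<exists>(V' :: 'a set) E'. minimal_xy_tdg x y V' E' \<and> card V' = n \<and> card E' + 2 + x + y = 2 * n"
proof -
  define s where "s = x + y + 1 - n"
  define a where "a = x - s"
  define b where "b = y - s"
  define m where "m = n + s - x - y"
  have a1: "a \<ge> 1" and b1: "b \<ge> 1" and m1: "m \<ge> 1" and N: "a + b + m + s = n"
    and xs: "a + s = x" and ys: "b + s = y"
    using x y xn yn unfolding s_def a_def b_def m_def by auto
  have mn: "minimal_xy_tdg x y {0..<n} (cE a b m)" and cn: "card (cE a b m) = (m + b - 1) + (a + m - 1)"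
    using constr_nat(1)[where s = s, OF a1 b1 m1] constr_nat(2)[OF a1 b1 m1] N xs ys by auto
  obtain f where f: "bij_betw f {0..<n} V" using ex_bij_betw_nat_finite[OF fV] n by auto
  have inj: "inj_on f {0..<n}" and im: "f ` {0..<n} = V" using f unfolding bij_betw_def by auto
  have tr: "minimal_xy_tdg x y V (map_prod f f ` cE a b m) \<and> card (map_prod f f ` cE a b m) = card (cE a b m)"
    using transfer[OF inj mn] im by simp
  moreover have "card (cE a b m) + 2 + x + y = 2 * n" using cn a1 b1 m1 N xs ys by simp
  ultimately show ?thesis using n by metis
qed

lemma Dn_xbig:
  assumes m: "minimal_xy_tdg x y V E" and n: "card V = n" and xb: "n \<le> x + 1"
  shows "Dn V E + x = n"
proof -
  have t: "tdg V E" and cx: "card {v \<in> V. initial V E v} = x"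
    using m unfolding minimal_xy_tdg_def xy_tdg_def by auto
  have fV: "finite V" using t unfolding tdg_def by auto
  let ?NI = "V - {v \<in> V. initial V E v}"
  have cNI: "card ?NI = n - x" using cx n fV by (simp add: card_Diff_subset)
  have "OT V E = {}"
  proof (rule ccontr)
    assume "OT V E \<noteq> {}"
    then obtain p where p: "p \<in> OT V E" by auto
    have "outN E p \<subseteq> ?NI" using tdg_sub[OF t] unfolding outN_def initial_def by auto
    then have "card (outN E p) \<le> card ?NI" using fV by (intro card_mono) auto
    moreover have "2 \<le> card (outN E p)" using p unfolding OT_def by auto
    ultimately show False using cNI xb by simp
  qed
  then show ?thesis using OT_empty[OF m] n unfolding Dn_def by simp
qed

lemma Dn_ybig:
  assumes m: "minimal_xy_tdg x y V E" and n: "card V = n" and yb: "n \<le> y + 1"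
  shows "Dn V E + y = n"
proof -
  have t: "tdg V E" and cy: "card {v \<in> V. terminal V E v} = y"
    using m unfolding minimal_xy_tdg_def xy_tdg_def by auto
  have fV: "finite V" using t unfolding tdg_def by auto
  let ?NT = "V - {v \<in> V. terminal V E v}"
  have cNT: "card ?NT = n - y" using cy n fV by (simp add: card_Diff_subset)
  have "IT V E = {}"
  proof (rule ccontr)
    assume "IT V E \<noteq> {}"
    then obtain p where p: "p \<in> IT V E" by auto
    have "inN E p \<subseteq> ?NT" using tdg_sub[OF t] unfolding inN_def terminal_def by auto
    then have "card (inN E p) \<le> card ?NT" using fV by (intro card_mono) auto
    moreover have "2 \<le> card (inN E p)" using p unfolding IT_def by auto
    ultimately show False using cNT yb by simp
  qed
  then show ?thesis using IT_empty[OF m] n unfolding Dn_def by simp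
qed

lemma Dn_lower:
  assumes m: "minimal_xy_tdg x y V E" and n: "card V = n" and xn: "x + 2 \<le> n" and yn: "y + 2 \<le> n"
  shows "2 \<le> Dn V E"
proof -
  have t: "tdg V E" using m unfolding minimal_xy_tdg_def xy_tdg_def by auto
  have fV: "finite V" using t unfolding tdg_def by auto
  show ?thesis
  proof (cases "OT V E = {}")
    case True
    then show ?thesis using OT_empty[OF m True] n xn unfolding Dn_def by simp
  next
    case F1: False
    show ?thesis
    proof (cases "IT V E = {}")
      case True
      then show ?thesis using IT_empty[OF m True] n yn unfolding Dn_def by simp
    next
      case False
      have "card (OT V E) \<ge> 1" using F1 fV unfolding OT_def
        by (metis (no_types, lifting) One_nat_def Suc_leI card_gt_0_iff finite_subset mem_Collect_eq subsetI)
      moreover have "card (IT V E) \<ge> 1" using False fV unfolding IT_def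
        by (metis (no_types, lifting) One_nat_def Suc_leI card_gt_0_iff finite_subset mem_Collect_eq subsetI)
      ultimately show ?thesis unfolding Dn_def by simp
    qed
  qed
qed

definition LHSd :: "'a set \<Rightarrow> ('a \<times> 'a) set \<Rightarrow> nat \<Rightarrow> nat \<Rightarrow> nat \<Rightarrow> bool" where
  "LHSd V E n x y = (\<forall>(V' :: 'a set) E'. minimal_xy_tdg x y V' E' \<and> card V' = n \<longrightarrow> card E' \<le> card E)"

lemma LHS_iff:
  assumes m: "minimal_xy_tdg x y V E" and n: "card V = n" and x: "1 \<le> x" and y: "1 \<le> y"
  shows "LHSd V E n x y \<longleftrightarrow> Dn V E \<le> 2"
proof
  have t: "tdg V E" using m unfolding minimal_xy_tdg_def xy_tdg_def by auto
  have fV: "finite V" using t unfolding tdg_def by auto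
  have ci: "card E + Dn V E + x + y = 2 * n" using count_identity[OF m] n unfolding Dn_def by simp
  assume L: "LHSd V E n x y"
  show "Dn V E \<le> 2"
  proof (cases "x + 2 \<le> n \<and> y + 2 \<le> n")
    case True
    then obtain V' E' where VE: "minimal_xy_tdg x y (V' :: 'a set) E'" "card V' = n" "card E' + 2 + x + y = 2 * n"
      using construct[OF fV n x y] by blast
    then have "card E' \<le> card E" using L unfolding LHSd_def by blast
    then show ?thesis using VE(3) ci by simp
  next
    case False
    then have "n \<le> x + 1 \<or> n \<le> y + 1" by auto
    then show ?thesis using Dn_xbig[OF m n] Dn_ybig[OF m n] by auto
  qed
next
  have ci: "card E + Dn V E + x + y = 2 * n" using count_identity[OF m] n unfolding Dn_def by simp
  assume D: "Dn V E \<le> 2"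
  show "LHSd V E n x y" unfolding LHSd_def
  proof (intro allI impI)
    fix V' :: "'a set" and E' assume h: "minimal_xy_tdg x y V' E' \<and> card V' = n"
    then have m': "minimal_xy_tdg x y V' E'" and n': "card V' = n" by auto
    have ci': "card E' + Dn V' E' + x + y = 2 * n" using count_identity[OF m'] n' unfolding Dn_def by simp
    have "Dn V E \<le> Dn V' E'"
    proof (cases "x + 2 \<le> n \<and> y + 2 \<le> n")
      case True
      then show ?thesis using Dn_lower[OF m' n'] D by simp
    next
      case False
      then have "n \<le> x + 1 \<or> n \<le> y + 1" by auto
      then show ?thesis using Dn_xbig[OF m n] Dn_ybig[OF m n] Dn_xbig[OF m' n'] Dn_ybig[OF m' n'] by auto
    qed
    then show "card E' \<le> card E" using ci ci' by simp
  qed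
qed

definition condB :: "'a set \<Rightarrow> ('a \<times> 'a) set \<Rightarrow> 'a set \<Rightarrow> bool" where
  "condB V E C = (\<exists>u v. u \<in> C \<and> v \<in> C \<and> initial V E u \<and> terminal V E v
                \<and> card {w \<in> C. interior V E w} \<ge> 2
                \<and> (\<forall>w \<in> C. interior V E w \<longrightarrow> adj E u w \<and> adj E v w)
                \<and> (\<forall>z. adj E u z \<longrightarrow> interior V E z \<or> terminal V E z)
                \<and> (\<forall>z. adj E v z \<longrightarrow> interior V E z \<or> initial V E z))"

definition condC :: "'a set \<Rightarrow> ('a \<times> 'a) set \<Rightarrow> 'a set \<Rightarrow> bool" where
  "condC V E C = (\<exists>w. {c \<in> C. interior V E c} = {w} \<and>
                (let P = {a. initial V E a \<and> adj E w a};
                     Q = {b. terminal V E b \<and> adj E w b} in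
                  card P > 0 \<and> card Q > 0
                  \<and> (card P = 1 \<longrightarrow> (\<forall>a \<in> P. \<forall>z. adj E a z \<longrightarrow> z = w \<or> terminal V E z))
                  \<and> (card Q = 1 \<longrightarrow> (\<forall>b \<in> Q. \<forall>z. adj E b z \<longrightarrow> z = w \<or> initial V E z))
                  \<and> (card P > 1 \<longrightarrow> (\<forall>a \<in> P. \<forall>z. adj E a z \<longrightarrow> z = w))
                  \<and> (card Q > 1 \<longrightarrow> (\<forall>b \<in> Q. \<forall>z. adj E b z \<longrightarrow> z = w))))"

definition RHSd :: "'a set \<Rightarrow> ('a \<times> 'a) set \<Rightarrow> nat \<Rightarrow> nat \<Rightarrow> nat \<Rightarrow> bool" where
  "RHSd V E n x y = (card (nontriv_components V E) \<le> 2
     \<and> (nontriv_components V E = {} \<longrightarrow> n = x \<and> x = y)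
     \<and> (card (nontriv_components V E) = 2 \<longrightarrow> (\<forall>v \<in> V. \<not> interior V E v))
     \<and> (\<forall>C. nontriv_components V E = {C} \<longrightarrow>
          ((\<forall>v \<in> C. \<not> interior V E v) \<or> condB V E C \<or> condC V E C)))"

lemma fin_nontriv: "tdg V E \<Longrightarrow> finite (nontriv_components V E)"
proof -
  assume t: "tdg V E"
  have "nontriv_components V E \<subseteq> components V E" unfolding nontriv_components_def by auto
  moreover have "finite (components V E)" using t unfolding components_eq tdg_def by auto
  ultimately show ?thesis by (rule finite_subset)
qed

lemma no_nontriv_E:
  assumes t: "tdg V E" and N: "nontriv_components V E = {}"
  shows "E = {}"
proof (rule ccontr)
  assume "E \<noteq> {}"
  then obtain p q where e: "(p, q) \<in> E" by auto
  then have "p \<in> V" "adj E p q" using tdg_sub[OF t e] unfolding adj_def by auto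
  then have "cmp V E p \<in> nontriv_components V E" using nontriv_eq[OF t] by auto
  then show False using N by simp
qed

lemma RHS_to_D:
  assumes m: "minimal_xy_tdg x y V E" and R: "RHSd V E n x y"
  shows "Dn V E \<le> 2"
proof -
  have t: "tdg V E" using m unfolding minimal_xy_tdg_def xy_tdg_def by auto
  have fV: "finite V" using t unfolding tdg_def by auto
  have fW: "finite (Wi V E)" using fV unfolding Wi_def by auto
  have du: "Dn V E \<le> card (Wi V E) + card (nontriv_components V E)" using D_upper[OF m] .
  have c2: "card (nontriv_components V E) \<le> 2" using R unfolding RHSd_def by (rule conjunct1)
  have r2: "card (nontriv_components V E) = 2 \<longrightarrow> (\<forall>v \<in> V. \<not> interior V E v)"
    using R unfolding RHSd_def by (elim conjE)
  have r3: "\<forall>C. nontriv_components V E = {C} \<longrightarrow>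
          ((\<forall>v \<in> C. \<not> interior V E v) \<or> condB V E C \<or> condC V E C)"
    using R unfolding RHSd_def by (elim conjE)
  consider "card (nontriv_components V E) = 0" | "card (nontriv_components V E) = 1"
    | "card (nontriv_components V E) = 2" using c2 by linarith
  then show ?thesis
  proof cases
    case 1
    then have "nontriv_components V E = {}" using fin_nontriv[OF t] by simp
    then have "Wi V E = {}" using Wi_empty_none[OF t] by simp
    then show ?thesis using du 1 by simp
  next
    case 2
    then obtain C where C: "nontriv_components V E = {C}" by (rule card_1_singletonE)
    have WC: "Wi V E \<subseteq> C" using Wi_sub_single[OF t C] .
    from r3 C have "(\<forall>v \<in> C. \<not> interior V E v) \<or> condB V E C \<or> condC V E C" by blast
    then consider "\<forall>v \<in> C. \<not> interior V E v" | "condB V E C" | "condC V E C" by blast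
    then show ?thesis
    proof cases
      case 1
      then have "Wi V E = {}" using WC unfolding Wi_def by auto
      then show ?thesis using du 2 by simp
    next
      case 2
      then obtain u v where uv: "u \<in> C" "v \<in> C" "initial V E u" "terminal V E v"
                "card {w \<in> C. interior V E w} \<ge> 2"
                "\<forall>w \<in> C. interior V E w \<longrightarrow> adj E u w \<and> adj E v w"
        unfolding condB_def by blast
      show ?thesis using B4[OF m C uv(1) uv(3) uv(2) uv(4) uv(5) uv(6)] .
    next
      case 3
      then obtain w where w: "{c \<in> C. interior V E c} = {w}" unfolding condC_def by blast
      moreover have "\<And>c. interior V E c \<Longrightarrow> c \<in> V" unfolding interior_def by auto
      ultimately have "Wi V E = {w}" using WC unfolding Wi_def by blast
      then show ?thesis using du 2 by simp
    qed
  next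
    case 3
    then have "Wi V E = {}" using r2 unfolding Wi_def by auto
    then show ?thesis using du 3 by simp
  qed
qed

lemma D_to_RHS:
  assumes m: "minimal_xy_tdg x y V E" and n: "card V = n" and D: "Dn V E \<le> 2"
  shows "RHSd V E n x y"
proof -
  have t: "tdg V E" and cx: "card {v \<in> V. initial V E v} = x"
    and cy: "card {v \<in> V. terminal V E v} = y"
    using m unfolding minimal_xy_tdg_def xy_tdg_def by auto
  have fV: "finite V" using t unfolding tdg_def by auto
  have fW: "finite (Wi V E)" using fV unfolding Wi_def by auto
  have h1: "card (nontriv_components V E) \<le> 2" using A1[OF t] D by simp
  have h2: "nontriv_components V E = {} \<longrightarrow> n = x \<and> x = y"
  proof
    assume N: "nontriv_components V E = {}"
    then have "E = {}" by (rule no_nontriv_E[OF t])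
    then have "{v \<in> V. initial V E v} = V" "{v \<in> V. terminal V E v} = V"
      unfolding initial_def terminal_def by auto
    then show "n = x \<and> x = y" using cx cy n by simp
  qed
  have h3: "card (nontriv_components V E) = 2 \<longrightarrow> (\<forall>v \<in> V. \<not> interior V E v)"
    using A2[OF t] D by fastforce
  have h4: "\<forall>C. nontriv_components V E = {C} \<longrightarrow>
          ((\<forall>v \<in> C. \<not> interior V E v) \<or> condB V E C \<or> condC V E C)"
  proof (intro allI impI)
    fix C assume C: "nontriv_components V E = {C}"
    have WC: "Wi V E \<subseteq> C" using Wi_sub_single[OF t C] .
    have Weq: "{c \<in> C. interior V E c} = Wi V E" using WC unfolding Wi_def interior_def by auto
    consider "Wi V E = {}" | w where "Wi V E = {w}" | w1 w2 where "w1 \<in> Wi V E" "w2 \<in> Wi V E" "w1 \<noteq> w2"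
      by (metis all_not_in_conv is_singletonI' is_singleton_the_elem)
    then show "(\<forall>v \<in> C. \<not> interior V E v) \<or> condB V E C \<or> condC V E C"
    proof cases
      case 1
      then have "\<forall>v \<in> C. \<not> interior V E v" using Weq by auto
      then show ?thesis by simp
    next
      case (2 w)
      have "condC V E C" unfolding condC_def using Weq 2 Ac[OF m 2] by blast
      then show ?thesis by simp
    next
      case (3 w1 w2)
      have i1: "interior V E w1" and i2: "interior V E w2" using 3 unfolding Wi_def by auto
      obtain u v where uv: "initial V E u" "terminal V E v"
        "\<forall>w. interior V E w \<longrightarrow> (u, w) \<in> E \<and> (w, v) \<in> E"
        using A3[OF t D 3(3) i1 i2] by blast
      have s: "E \<subseteq> V \<times> V" using t unfolding tdg_def by auto
      have w1C: "w1 \<in> C" using 3 WC by auto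
      have Ccmp: "C = cmp V E w1" using nontriv_is_cmp[of C V E w1] C w1C by auto
      have "adj E w1 u" "adj E w1 v" using uv(3) i1 unfolding adj_def by auto
      then have uC: "u \<in> C" and vC: "v \<in> C"
        using comp_closed[OF s] comp_self[of w1 V E] w1C Ccmp by (metis comp_closed s)+
      have card2: "card {w \<in> C. interior V E w} \<ge> 2" using Weq two_card[OF fW 3] by simp
      have adjs: "\<forall>w \<in> C. interior V E w \<longrightarrow> adj E u w \<and> adj E v w"
        using uv(3) unfolding adj_def by auto
      have au: "\<forall>z. adj E u z \<longrightarrow> interior V E z \<or> terminal V E z"
      proof (intro allI impI)
        fix z assume "adj E u z"
        then have e: "(u, z) \<in> E" using initial_adj[OF uv(1)] by auto
        then have "z \<in> V" "\<not> initial V E z" using tdg_sub[OF t e] unfolding initial_def by auto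
        then show "interior V E z \<or> terminal V E z" unfolding interior_def by auto
      qed
      have av: "\<forall>z. adj E v z \<longrightarrow> interior V E z \<or> initial V E z"
      proof (intro allI impI)
        fix z assume "adj E v z"
        then have e: "(z, v) \<in> E" using terminal_adj[OF uv(2)] by auto
        then have "z \<in> V" "\<not> terminal V E z" using tdg_sub[OF t e] unfolding terminal_def by auto
        then show "interior V E z \<or> initial V E z" unfolding interior_def by auto
      qed
      have "condB V E C" unfolding condB_def
        using uC vC uv(1) uv(2) card2 adjs au av by blast
      then show ?thesis by simp
    qed
  qed
  show ?thesis unfolding RHSd_def using h1 h2 h3 h4 by blast
qed

theorem mainTheorem3:
  fixes V :: "'a set" and E :: "('a \<times> 'a) set" and x y n :: nat
  assumes "x \<ge> 1" and "y \<ge> 1" and "n \<ge> max x y"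
    and "minimal_xy_tdg x y V E" and "card V = n"
  shows "(\<forall>(V' :: 'a set) E'. minimal_xy_tdg x y V' E' \<and> card V' = n \<longrightarrow> card E' \<le> card E)
    \<longleftrightarrow>
    (card (nontriv_components V E) \<le> 2
     \<and> (nontriv_components V E = {} \<longrightarrow> n = x \<and> x = y)
     \<and> (card (nontriv_components V E) = 2 \<longrightarrow> (\<forall>v \<in> V. \<not> interior V E v))
     \<and> (\<forall>C. nontriv_components V E = {C} \<longrightarrow>
          ((\<forall>v \<in> C. \<not> interior V E v)
           \<or> (\<exists>u v. u \<in> C \<and> v \<in> C \<and> initial V E u \<and> terminal V E v
                \<and> card {w \<in> C. interior V E w} \<ge> 2
                \<and> (\<forall>w \<in> C. interior V E w \<longrightarrow> adj E u w \<and> adj E v w)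
                \<and> (\<forall>z. adj E u z \<longrightarrow> interior V E z \<or> terminal V E z)
                \<and> (\<forall>z. adj E v z \<longrightarrow> interior V E z \<or> initial V E z))
           \<or> (\<exists>w. {c \<in> C. interior V E c} = {w} \<and>
                (let P = {a. initial V E a \<and> adj E w a};
                     Q = {b. terminal V E b \<and> adj E w b} in
                  card P > 0 \<and> card Q > 0
                  \<and> (card P = 1 \<longrightarrow> (\<forall>a \<in> P. \<forall>z. adj E a z \<longrightarrow> z = w \<or> terminal V E z))
                  \<and> (card Q = 1 \<longrightarrow> (\<forall>b \<in> Q. \<forall>z. adj E b z \<longrightarrow> z = w \<or> initial V E z))
                  \<and> (card P > 1 \<longrightarrow> (\<forall>a \<in> P. \<forall>z. adj E a z \<longrightarrow> z = w))
                  \<and> (card Q > 1 \<longrightarrow> (\<forall>b \<in> Q. \<forall>z. adj E b z \<longrightarrow> z = w)))))))"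
proof -
  have L: "LHSd V E n x y \<longleftrightarrow> Dn V E \<le> 2" using LHS_iff[OF assms(4) assms(5) assms(1) assms(2)] .
  have R: "RHSd V E n x y \<longleftrightarrow> Dn V E \<le> 2"
    using RHS_to_D[OF assms(4)] D_to_RHS[OF assms(4) assms(5)] by blast
  show ?thesis (is "?A \<longleftrightarrow> ?B")
  proof -
    have eA: "?A = LHSd V E n x y" unfolding LHSd_def by (rule refl)
    have eB: "?B = RHSd V E n x y" unfolding RHSd_def condB_def condC_def by (rule refl)
    show ?thesis by (simp only: eA eB L R)
  qed
qed

end
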